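(* Consider a sequence (indexed by the sample size $n\to\infty$) of linear models $\mathbf{y}=\mathbf{X}\boldsymbol{\beta}+\boldsymbol{\epsilon}$ as described in the context, satisfying assumptions (A1)–(A6) of the context. Suppose moreover that the following condition holds: there exists $C>0$ such that $|(\Pi_j X_j)^T X_k|\le C n^{-\gamma}$ for all $j\in\{1,\dots,p\}$ and all $k\in\mathcal{S}\setminus\mathcal{C}_j$ with $k\neq j$. Then $\mathbb{P}(\mathcal{E}_1)\to 1$, where $$\mathcal{E}_1=\Big\{\frac{|c_k^*(s_k)|}{\min_{j\in\mathcal{S}}|c_j^*(s_j)|}\to 0 \text{ for all } k\notin\mathcal{S}\Big\},$$ and this holds regardless of the choice of rescaling factor, i.e. both with $s_j=\lambda_j$ for all $j$ and with $s_j=\Lambda_j$ for all $j$. Moreover, on the event $\mathcal{E}_1$ the following hold (for either rescaling factor unless stated otherwise): (i) $n^{\mu}\, c_j^*\to 0$ for $j\notin\mathcal{S}$; (ii) $n^{\mu}\,|c_j^*|\to\infty$ for $j\in\mathcal{S}$; (iii) with the rescaling factor $\lambda_j$, $c_j^*(\lambda_j)/\beta_j\to 1$ whenever $\beta_j\neq 0$.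
   Context: Model: $\mathbf{y}=\mathbf{X}\boldsymbol{\beta}+\boldsymbol{\epsilon}$, where $\mathbf{y}\in\mathbb{R}^n$, $\mathbf{X}=(X_1,\dots,X_p)$ is an $n\times p$ design matrix whose columns satisfy $\|X_j\|_2=1$, $\boldsymbol{\beta}\in\mathbb{R}^p$, and $\epsilon_1,\dots,\epsilon_n$ are i.i.d. $\mathcal{N}(0,\sigma^2/n)$ with $\sigma^2<\infty$. The quantities $p,\mathbf{X},\boldsymbol{\beta}$ may depend on $n$. Let $\mathcal{S}=\{j:\beta_j\neq0\}$, $c_{j,k}=X_j^TX_k$, and for $\mathcal{D}\subseteq\{1,\dots,p\}$ let $\mathbf{X}_\mathcal{D}$, $\boldsymbol{\beta}_\mathcal{D}$ be the corresponding column submatrix / subvector. Given a threshold $\pi_n\in(0,1)$, let $\mathcal{C}_j=\{k\neq j: |c_{j,k}|>\pi_n\}$, let $\Pi_j$ be the orthogonal projection onto the span of $\{X_k:k\in\mathcal{C}_j\}$ (the zero matrix if $\mathcal{C}_j=\emptyset$), $X_j^*=(\mathbf{I}_n-\Pi_j)X_j$, $a_j=\|\Pi_jX_j\|_2^2/\|X_j\|_2^2$, $a_{jy}=\|\Pi_j\mathbf{y}\|_2^2/\|\mathbf{y}\|_2^2$, and the rescaling factors $\lambda_j=1-a_j$ and $\Lambda_j=\{(1-a_j)(1-a_{jy})\}^{1/2}$. The tilted correlation with rescaling factor $s_j$ is $c_j^*(s_j)=s_j^{-1}X_j^{*T}\mathbf{y}$; $c_j^*$ denotes it for either choice. Assumptions: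 (A1) $|\mathcal{S}|=O(n^{\delta})$ for some $\delta\in[0,1/2)$. (A2) $\log p=O(n^{\theta})$ with $\theta\in[0,1-2\gamma)$ for some $\gamma\in(\delta,1/2)$. (A3) With this $\gamma$, $\pi_n=C_1n^{-\gamma}$ for some $C_1>0$, and there is $C>0$ with $|\mathcal{C}_j|\le Cn^{\xi}$ uniformly in $j$, where $\xi\in[0,2(\gamma-\delta))$. (A4) $\max_{j\in\mathcal{S}}|\beta_j|<M$ for some $M\in(0,\infty)$ and $n^{\mu}\min_{j\in\mathcal{S}}|\beta_j|\to\infty$ for some $\mu\in[0,\gamma-\delta-\xi/2)$. (A5) There is $\alpha\in(0,1)$ with $1-a_j>\alpha$ for all $j$. (A6) For every $j$ with $\mathcal{S}\not\subseteq\mathcal{C}_j$, $n^{\kappa}\|(\mathbf{I}_n-\Pi_j)\mathbf{X}_\mathcal{S}\boldsymbol{\beta}_\mathcal{S}\|_2^2/\|\mathbf{X}_\mathcal{S}\boldsymbol{\beta}_\mathcal{S}\|_2^2\to\infty$, for some $\kappa$ with $\kappa/2+\mu\in[0,\gamma-\delta-\xi/2)$. *)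

theory Defs
  imports "HOL-Probability.Probability" "HOL-Library.Landau_Symbols"
begin

(* Vectors in R^n are represented as functions nat => real, only coordinates i < n matter.
   An n x p design matrix is a function X :: nat => nat => real, X i j = entry in row i, column j. *)

definition vinner :: "nat \<Rightarrow> (nat \<Rightarrow> real) \<Rightarrow> (nat \<Rightarrow> real) \<Rightarrow> real" where
  "vinner n u v = (\<Sum>i<n. u i * v i)"

definition col :: "(nat \<Rightarrow> nat \<Rightarrow> real) \<Rightarrow> nat \<Rightarrow> nat \<Rightarrow> real" where
  "col X k = (\<lambda>i. X i k)"

definition colspan :: "nat \<Rightarrow> (nat \<Rightarrow> nat \<Rightarrow> real) \<Rightarrow> nat set \<Rightarrow> (nat \<Rightarrow> real) set" where
  "colspan n X K = {w. \<exists>a. w = (\<lambda>i. if i < n then (\<Sum>k\<in>K. a k * X i k) else 0)}"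

definition proj :: "nat \<Rightarrow> (nat \<Rightarrow> nat \<Rightarrow> real) \<Rightarrow> nat set \<Rightarrow> (nat \<Rightarrow> real) \<Rightarrow> nat \<Rightarrow> real" where
  "proj n X K v = (THE w. w \<in> colspan n X K \<and>
      (\<forall>k\<in>K. vinner n (\<lambda>i. v i - w i) (col X k) = 0))"

definition corr :: "nat \<Rightarrow> (nat \<Rightarrow> nat \<Rightarrow> real) \<Rightarrow> nat \<Rightarrow> nat \<Rightarrow> real" where
  "corr n X j k = vinner n (col X j) (col X k)"

definition Cset :: "nat \<Rightarrow> nat \<Rightarrow> (nat \<Rightarrow> nat \<Rightarrow> real) \<Rightarrow> real \<Rightarrow> nat \<Rightarrow> nat set" where
  "Cset n p X thr j = {k. k < p \<and> k \<noteq> j \<and> thr < \<bar>corr n X j k\<bar>}"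

definition PiX :: "nat \<Rightarrow> nat \<Rightarrow> (nat \<Rightarrow> nat \<Rightarrow> real) \<Rightarrow> real \<Rightarrow> nat \<Rightarrow> nat \<Rightarrow> real" where
  "PiX n p X thr j = proj n X (Cset n p X thr j) (col X j)"

definition Xstar :: "nat \<Rightarrow> nat \<Rightarrow> (nat \<Rightarrow> nat \<Rightarrow> real) \<Rightarrow> real \<Rightarrow> nat \<Rightarrow> nat \<Rightarrow> real" where
  "Xstar n p X thr j = (\<lambda>i. if i < n then X i j - PiX n p X thr j i else 0)"

definition a_coef :: "nat \<Rightarrow> nat \<Rightarrow> (nat \<Rightarrow> nat \<Rightarrow> real) \<Rightarrow> real \<Rightarrow> nat \<Rightarrow> real" where
  "a_coef n p X thr j = vinner n (PiX n p X thr j) (PiX n p X thr j) / vinner n (col X j) (col X j)"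

definition a_y :: "nat \<Rightarrow> nat \<Rightarrow> (nat \<Rightarrow> nat \<Rightarrow> real) \<Rightarrow> real \<Rightarrow> (nat \<Rightarrow> real) \<Rightarrow> nat \<Rightarrow> real" where
  "a_y n p X thr y j =
     vinner n (proj n X (Cset n p X thr j) y) (proj n X (Cset n p X thr j) y) / vinner n y y"

datatype rescale = Lam | BigLam

definition resc :: "rescale \<Rightarrow> nat \<Rightarrow> nat \<Rightarrow> (nat \<Rightarrow> nat \<Rightarrow> real) \<Rightarrow> real \<Rightarrow> (nat \<Rightarrow> real) \<Rightarrow> nat \<Rightarrow> real" where
  "resc s n p X thr y j = (case s of
      Lam \<Rightarrow> 1 - a_coef n p X thr j
    | BigLam \<Rightarrow> sqrt ((1 - a_coef n p X thr j) * (1 - a_y n p X thr y j)))"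

definition tilted :: "rescale \<Rightarrow> nat \<Rightarrow> nat \<Rightarrow> (nat \<Rightarrow> nat \<Rightarrow> real) \<Rightarrow> real \<Rightarrow> (nat \<Rightarrow> real) \<Rightarrow> nat \<Rightarrow> real" where
  "tilted s n p X thr y j = vinner n (Xstar n p X thr j) y / resc s n p X thr y j"

definition supp :: "nat \<Rightarrow> (nat \<Rightarrow> real) \<Rightarrow> nat set" where
  "supp p b = {j. j < p \<and> b j \<noteq> 0}"

definition signal :: "nat \<Rightarrow> nat \<Rightarrow> (nat \<Rightarrow> nat \<Rightarrow> real) \<Rightarrow> (nat \<Rightarrow> real) \<Rightarrow> nat \<Rightarrow> real" where
  "signal n p X b = (\<lambda>i. if i < n then (\<Sum>j\<in>supp p b. X i j * b j) else 0)"

definition resp :: "nat \<Rightarrow> nat \<Rightarrow> (nat \<Rightarrow> nat \<Rightarrow> real) \<Rightarrow> (nat \<Rightarrow> real) \<Rightarrow> (nat \<Rightarrow> real) \<Rightarrow> nat \<Rightarrow> real" where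
  "resp n p X b e = (\<lambda>i. if i < n then (\<Sum>j<p. X i j * b j) + e i else 0)"

end

theory Submission
  imports Defs
begin

definition lc :: "(nat \<Rightarrow> real) set \<Rightarrow> ((nat \<Rightarrow> real) \<Rightarrow> real) \<Rightarrow> nat \<Rightarrow> real" where
  "lc Q c = (\<lambda>i. \<Sum>q\<in>Q. c q * q i)"

definition opr :: "nat \<Rightarrow> (nat \<Rightarrow> real) set \<Rightarrow> (nat \<Rightarrow> real) \<Rightarrow> nat \<Rightarrow> real" where
  "opr n Q v = lc Q (\<lambda>q. vinner n v q)"

definition orthonormal :: "nat \<Rightarrow> (nat \<Rightarrow> real) set \<Rightarrow> bool" where
  "orthonormal n Q = (\<forall>q\<in>Q. \<forall>q'\<in>Q. vinner n q q' = (if q = q' then 1 else 0))"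

lemma vinner_sym: "vinner n u v = vinner n v u"
  by (simp add: vinner_def mult.commute)

lemma vinner_cong: "(\<And>i. i < n \<Longrightarrow> u i = u' i) \<Longrightarrow> (\<And>i. i < n \<Longrightarrow> v i = v' i) \<Longrightarrow>
   vinner n u v = vinner n u' v'"
  by (simp add: vinner_def)

lemma vinner_diff_left: "vinner n (\<lambda>i. u i - w i) v = vinner n u v - vinner n w v"
  by (simp add: vinner_def algebra_simps sum_subtractf)

lemma vinner_add_left: "vinner n (\<lambda>i. u i + w i) v = vinner n u v + vinner n w v"
  by (simp add: vinner_def algebra_simps sum.distrib)

lemma vinner_diff_right: "vinner n v (\<lambda>i. u i - w i) = vinner n v u - vinner n v w"
  by (simp add: vinner_def algebra_simps sum_subtractf)

lemma vinner_add_right: "vinner n v (\<lambda>i. u i + w i) = vinner n v u + vinner n v w"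
  by (simp add: vinner_def algebra_simps sum.distrib)

lemma vinner_scale_left: "vinner n (\<lambda>i. c * u i) v = c * vinner n u v"
  by (simp add: vinner_def sum_distrib_left algebra_simps)

lemma vinner_scale_right: "vinner n v (\<lambda>i. c * u i) = c * vinner n v u"
  by (simp add: vinner_def sum_distrib_left algebra_simps)

lemma vinner_lc_left: "vinner n (lc Q c) w = (\<Sum>q\<in>Q. c q * vinner n q w)"
  unfolding vinner_def lc_def
  by (simp add: sum_distrib_left sum_distrib_right mult.assoc) (rule sum.swap)

lemma vinner_lc_right: "vinner n w (lc Q c) = (\<Sum>q\<in>Q. c q * vinner n w q)"
  using vinner_lc_left[of n Q c w] by (simp add: vinner_sym)

lemma vinner_self_nonneg: "0 \<le> vinner n u u"
  by (simp add: vinner_def sum_nonneg)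

lemma vinner_self_eq_0: "vinner n u u = 0 \<longleftrightarrow> (\<forall>i<n. u i = 0)"
  unfolding vinner_def by (subst sum_nonneg_eq_0_iff) auto

lemma orthonormal_sum:
  assumes "orthonormal n Q" "finite Q" "q \<in> Q"
  shows "(\<Sum>q'\<in>Q. c q' * vinner n q' q) = c q"
proof -
  have "(\<Sum>q'\<in>Q. c q' * vinner n q' q) = (\<Sum>q'\<in>Q. if q' = q then c q else 0)"
    using assms by (intro sum.cong) (auto simp: orthonormal_def)
  also have "\<dots> = c q" using assms by simp
  finally show ?thesis .
qed

lemma vinner_lc_q:
  assumes "orthonormal n Q" "finite Q" "q \<in> Q"
  shows "vinner n (lc Q c) q = c q"
  using assms by (simp add: vinner_lc_left orthonormal_sum)

lemma vinner_opr_q: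
  assumes "orthonormal n Q" "finite Q" "q \<in> Q"
  shows "vinner n (opr n Q v) q = vinner n v q"
  using assms unfolding opr_def by (rule vinner_lc_q)

lemma vinner_lc_lc:
  assumes "orthonormal n Q" "finite Q"
  shows "vinner n (lc Q c) (lc Q d) = (\<Sum>q\<in>Q. c q * d q)"
  using assms by (simp add: vinner_lc_right vinner_lc_q mult.commute)

lemma opr_norm:
  assumes "orthonormal n Q" "finite Q"
  shows "vinner n (opr n Q v) (opr n Q v) = (\<Sum>q\<in>Q. (vinner n v q)\<^sup>2)"
  using assms unfolding opr_def by (simp add: vinner_lc_lc power2_eq_square)

lemma resid_orth:
  assumes "orthonormal n Q" "finite Q" "q \<in> Q"
  shows "vinner n (\<lambda>i. v i - opr n Q v i) q = 0"
  using assms by (simp add: vinner_diff_left vinner_opr_q)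

lemma resid_orth_lc:
  assumes "orthonormal n Q" "finite Q"
  shows "vinner n (\<lambda>i. v i - opr n Q v i) (lc Q d) = 0"
  using assms by (simp add: vinner_lc_right resid_orth)

lemma resid_orth_opr:
  assumes "orthonormal n Q" "finite Q"
  shows "vinner n (\<lambda>i. v i - opr n Q v i) (opr n Q w) = 0"
  using assms unfolding opr_def[of n Q w] by (rule resid_orth_lc)

lemma colspan_iff: "w \<in> colspan n X K \<longleftrightarrow> (\<forall>i. n \<le> i \<longrightarrow> w i = 0) \<and> (\<exists>a. \<forall>i<n. w i = (\<Sum>k\<in>K. a k * X i k))"
proof
  assume "w \<in> colspan n X K"
  then obtain a where "w = (\<lambda>i. if i < n then (\<Sum>k\<in>K. a k * X i k) else 0)"
    by (auto simp: colspan_def)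
  then show "(\<forall>i. n \<le> i \<longrightarrow> w i = 0) \<and> (\<exists>a. \<forall>i<n. w i = (\<Sum>k\<in>K. a k * X i k))" by auto
next
  assume "(\<forall>i. n \<le> i \<longrightarrow> w i = 0) \<and> (\<exists>a. \<forall>i<n. w i = (\<Sum>k\<in>K. a k * X i k))"
  then obtain a where a: "\<forall>i<n. w i = (\<Sum>k\<in>K. a k * X i k)" and z: "\<forall>i. n \<le> i \<longrightarrow> w i = 0" by blast
  have "w = (\<lambda>i. if i < n then (\<Sum>k\<in>K. a k * X i k) else 0)"
    using a z by (auto simp: fun_eq_iff not_less)
  then show "w \<in> colspan n X K" by (auto simp: colspan_def)
qed

lemma colspan_zero_out: "w \<in> colspan n X K \<Longrightarrow> n \<le> i \<Longrightarrow> w i = 0"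
  by (simp add: colspan_iff)

lemma colspan_lc:
  assumes "finite Q" "Q \<subseteq> colspan n X K"
  shows "lc Q c \<in> colspan n X K"
proof -
  have "\<forall>q\<in>Q. \<exists>a. \<forall>i<n. q i = (\<Sum>k\<in>K. a k * X i k)"
    using assms(2) by (auto simp: colspan_iff)
  then obtain A where A: "\<And>q i. q \<in> Q \<Longrightarrow> i < n \<Longrightarrow> q i = (\<Sum>k\<in>K. A q k * X i k)"
    by metis
  have z: "lc Q c i = 0" if "n \<le> i" for i
    using assms(2) that by (auto simp: lc_def colspan_iff intro!: sum.neutral)
  have "lc Q c i = (\<Sum>k\<in>K. (\<Sum>q\<in>Q. c q * A q k) * X i k)" if "i < n" for i
  proof -
    have "lc Q c i = (\<Sum>q\<in>Q. c q * (\<Sum>k\<in>K. A q k * X i k))"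
      unfolding lc_def using A that by (intro sum.cong) auto
    also have "\<dots> = (\<Sum>q\<in>Q. \<Sum>k\<in>K. c q * A q k * X i k)"
      by (simp add: sum_distrib_left mult.assoc)
    also have "\<dots> = (\<Sum>k\<in>K. \<Sum>q\<in>Q. c q * A q k * X i k)" by (rule sum.swap)
    also have "\<dots> = (\<Sum>k\<in>K. (\<Sum>q\<in>Q. c q * A q k) * X i k)"
      by (simp add: sum_distrib_right)
    finally show ?thesis .
  qed
  with z show ?thesis by (auto simp: colspan_iff)
qed

lemma colspan_col:
  assumes "finite K" "k \<in> K"
  shows "(\<lambda>i. if i < n then X i k else 0) \<in> colspan n X K"
proof -
  have "\<forall>i<n. X i k = (\<Sum>k'\<in>K. (if k' = k then 1 else 0) * X i k')"
  proof (intro allI impI)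
    fix i
    have "(\<Sum>k'\<in>K. (if k' = k then 1 else 0) * X i k') = (\<Sum>k'\<in>K. if k' = k then X i k' else 0)"
      by (intro sum.cong) auto
    also have "\<dots> = X i k" using assms by (simp add: sum.delta')
    finally show "X i k = (\<Sum>k'\<in>K. (if k' = k then 1 else 0) * X i k')" by simp
  qed
  then show ?thesis by (auto simp: colspan_iff)
qed

lemma colspan_comb:
  assumes "u \<in> colspan n X K" "w \<in> colspan n X K"
  shows "(\<lambda>i. c * u i + d * w i) \<in> colspan n X K"
proof -
  obtain a where a: "\<forall>i<n. u i = (\<Sum>k\<in>K. a k * X i k)" using assms(1) by (auto simp: colspan_iff)
  obtain b where b: "\<forall>i<n. w i = (\<Sum>k\<in>K. b k * X i k)" using assms(2) by (auto simp: colspan_iff)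
  have "\<forall>i<n. c * u i + d * w i = (\<Sum>k\<in>K. (c * a k + d * b k) * X i k)"
    using a b by (simp add: sum_distrib_left sum.distrib algebra_simps)
  moreover have "\<forall>i. n \<le> i \<longrightarrow> c * u i + d * w i = 0"
    using assms by (simp add: colspan_iff)
  ultimately show ?thesis by (auto simp: colspan_iff)
qed

lemma colspan_mono:
  assumes "finite K" "K0 \<subseteq> K"
  shows "colspan n X K0 \<subseteq> colspan n X K"
proof
  fix w assume "w \<in> colspan n X K0"
  then obtain a where a: "\<forall>i<n. w i = (\<Sum>k\<in>K0. a k * X i k)" and z: "\<forall>i. n \<le> i \<longrightarrow> w i = 0"
    by (auto simp: colspan_iff)
  have "\<forall>i<n. w i = (\<Sum>k\<in>K. (if k \<in> K0 then a k else 0) * X i k)"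
  proof (intro allI impI)
    fix i assume "i < n"
    have "(\<Sum>k\<in>K. (if k \<in> K0 then a k else 0) * X i k) = (\<Sum>k\<in>K. if k \<in> K0 then a k * X i k else 0)"
      by (intro sum.cong) auto
    also have "\<dots> = (\<Sum>k\<in>K \<inter> K0. a k * X i k)"
      using assms by (simp add: sum.inter_restrict)
    also have "K \<inter> K0 = K0" using assms by auto
    finally show "w i = (\<Sum>k\<in>K. (if k \<in> K0 then a k else 0) * X i k)" using a \<open>i<n\<close> by simp
  qed
  with z show "w \<in> colspan n X K" by (auto simp: colspan_iff)
qed

lemma opr_cong:
  assumes "\<And>i. i < n \<Longrightarrow> v i = v' i" shows "opr n Q v = opr n Q v'"
proof -
  have "\<And>q. vinner n v q = vinner n v' q" by (rule vinner_cong) (use assms in auto)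
  then show ?thesis unfolding opr_def lc_def by simp
qed

lemma gram_schmidt:
  assumes "finite K"
  shows "\<exists>Q. finite Q \<and> card Q \<le> card K \<and> orthonormal n Q \<and> Q \<subseteq> colspan n X K \<and>
     (\<forall>k\<in>K. \<forall>i<n. X i k = opr n Q (col X k) i)"
  using assms
proof (induction K rule: finite_induct)
  case empty
  show ?case by (rule exI[of _ "{}"]) (auto simp: orthonormal_def)
next
  case (insert k K0)
  then obtain Q0 where Q0: "finite Q0" "card Q0 \<le> card K0" "orthonormal n Q0" "Q0 \<subseteq> colspan n X K0"
    "\<forall>l\<in>K0. \<forall>i<n. X i l = opr n Q0 (col X l) i" by blast
  have fin: "finite (insert k K0)" using insert by simp
  have Q0sub: "Q0 \<subseteq> colspan n X (insert k K0)"
    using Q0(4) colspan_mono[OF fin, of K0] by auto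
  define xk where "xk = (\<lambda>i. if i < n then X i k else 0)"
  define r where "r = (\<lambda>i. xk i - opr n Q0 xk i)"
  have xk_sp: "xk \<in> colspan n X (insert k K0)" unfolding xk_def by (rule colspan_col[OF fin]) simp
  have opr_sp: "opr n Q0 xk \<in> colspan n X (insert k K0)"
    unfolding opr_def using Q0(1) Q0sub by (rule colspan_lc)
  have r_sp: "r \<in> colspan n X (insert k K0)"
    using colspan_comb[OF xk_sp opr_sp, of 1 "-1"] by (simp add: r_def)
  have oprk: "opr n Q0 (col X k) = opr n Q0 xk"
    by (rule opr_cong) (simp add: xk_def col_def)
  have r_orth: "vinner n r q = 0" if "q \<in> Q0" for q
    unfolding r_def using Q0 that by (intro resid_orth) auto
  show ?case
  proof (cases "vinner n r r = 0")
    case True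
    then have r0: "\<forall>i<n. r i = 0" by (simp add: vinner_self_eq_0)
    show ?thesis
    proof (rule exI[of _ Q0], intro conjI)
      show "card Q0 \<le> card (insert k K0)" using Q0(2) insert by simp
      show "\<forall>l\<in>insert k K0. \<forall>i<n. X i l = opr n Q0 (col X l) i"
      proof (intro ballI allI impI)
        fix l i assume l: "l \<in> insert k K0" and i: "i < n"
        show "X i l = opr n Q0 (col X l) i"
        proof (cases "l = k")
          case True
          then show ?thesis using r0 i oprk by (simp add: r_def xk_def)
        next
          case False then show ?thesis using l i Q0(5) by auto
        qed
      qed
    qed (use Q0 Q0sub in auto)
  next
    case False
    define N where "N = vinner n r r"
    have Npos: "N > 0" using False vinner_self_nonneg[of n r] by (simp add: N_def)
    define qn where "qn = (\<lambda>i. (1 / sqrt N) * r i)"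
    have qn_sp: "qn \<in> colspan n X (insert k K0)"
      using colspan_comb[OF r_sp r_sp, of "1/sqrt N" 0] by (simp add: qn_def)
    have qn_orth: "vinner n qn q = 0" if "q \<in> Q0" for q
      unfolding qn_def vinner_scale_left by (simp add: r_orth that)
    have qn_orth': "vinner n q qn = 0" if "q \<in> Q0" for q
      using qn_orth[OF that] by (simp add: vinner_sym[of n q qn])
    have qn_norm: "vinner n qn qn = 1"
      unfolding qn_def vinner_scale_left vinner_scale_right N_def[symmetric]
      using Npos by (simp add: field_simps)
    have qn_notin: "qn \<notin> Q0"
    proof
      assume "qn \<in> Q0"
      then have "vinner n qn qn = 0" by (rule qn_orth)
      with qn_norm show False by simp
    qed
    have on: "orthonormal n (insert qn Q0)"
      unfolding orthonormal_def
    proof (intro ballI)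
      fix q q' assume q: "q \<in> insert qn Q0" and q': "q' \<in> insert qn Q0"
      show "vinner n q q' = (if q = q' then 1 else 0)"
      proof (cases "q = qn")
        case True
        show ?thesis
        proof (cases "q' = qn")
          case True then show ?thesis using \<open>q = qn\<close> qn_norm by simp
        next
          case False
          then have "q' \<in> Q0" using q' by simp
          then show ?thesis using \<open>q = qn\<close> qn_orth[of q'] qn_notin by auto
        qed
      next
        case False
        then have qQ: "q \<in> Q0" using q by simp
        show ?thesis
        proof (cases "q' = qn")
          case True then show ?thesis using qQ qn_orth'[of q] qn_notin by auto
        next
          case False
          then have "q' \<in> Q0" using q' by simp
          then show ?thesis using qQ Q0(3) by (simp add: orthonormal_def)
        qed
      qed
    qed
    have fQ: "finite (insert qn Q0)" using Q0(1) by simp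
    have opr_ins: "opr n (insert qn Q0) v i = vinner n v qn * qn i + opr n Q0 v i" for v i
      unfolding opr_def lc_def using Q0(1) qn_notin by simp
    show ?thesis
    proof (rule exI[of _ "insert qn Q0"], intro conjI)
      show "card (insert qn Q0) \<le> card (insert k K0)" using Q0(1,2) qn_notin insert by simp
      show "insert qn Q0 \<subseteq> colspan n X (insert k K0)" using qn_sp Q0sub by auto
      show "\<forall>l\<in>insert k K0. \<forall>i<n. X i l = opr n (insert qn Q0) (col X l) i"
      proof (intro ballI allI impI)
        fix l i assume l: "l \<in> insert k K0" and i: "i < n"
        show "X i l = opr n (insert qn Q0) (col X l) i"
        proof (cases "l = k")
          case True
          have "vinner n (col X k) qn = vinner n xk qn"
            by (rule vinner_cong) (auto simp: xk_def col_def)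
          also have "xk = (\<lambda>i. r i + opr n Q0 xk i)" by (simp add: r_def)
          also have "vinner n (\<lambda>i. r i + opr n Q0 xk i) qn = vinner n r qn + vinner n (opr n Q0 xk) qn"
            by (rule vinner_add_left)
          also have "vinner n (opr n Q0 xk) qn = 0"
          proof -
            have "vinner n (opr n Q0 xk) qn = vinner n qn (opr n Q0 xk)" by (rule vinner_sym)
            also have "\<dots> = (1 / sqrt N) * vinner n r (opr n Q0 xk)"
              unfolding qn_def by (rule vinner_scale_left)
            also have "vinner n r (opr n Q0 xk) = 0"
              unfolding r_def by (rule resid_orth_opr[OF Q0(3,1)])
            finally show ?thesis by simp
          qed
          also have "vinner n r qn = sqrt N"
            unfolding qn_def vinner_scale_right N_def[symmetric] using Npos
            by (simp add: real_div_sqrt)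
          finally have "vinner n (col X k) qn = sqrt N" by simp
          then have "opr n (insert qn Q0) (col X l) i = r i + opr n Q0 xk i"
            using True opr_ins oprk Npos by (simp add: qn_def)
          then show ?thesis using True i by (simp add: r_def xk_def)
        next
          case False
          then have lK: "l \<in> K0" using l by auto
          have "vinner n (col X l) qn = vinner n (opr n Q0 (col X l)) qn"
            by (rule vinner_cong) (use Q0(5) lK in \<open>auto simp: col_def\<close>)
          also have "\<dots> = 0"
            unfolding opr_def vinner_lc_left using qn_orth' by simp
          finally show ?thesis using opr_ins Q0(5) lK i by simp
        qed
      qed
    qed (use on fQ in auto)
  qed
qed

lemma proj_eq:
  assumes "finite K" "finite Q" "orthonormal n Q" "Q \<subseteq> colspan n X K"
    "\<forall>k\<in>K. \<forall>i<n. X i k = opr n Q (col X k) i"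
  shows "proj n X K v = opr n Q v"
proof -
  have sp: "opr n Q v \<in> colspan n X K" unfolding opr_def using assms by (intro colspan_lc)
  have orth: "\<forall>k\<in>K. vinner n (\<lambda>i. v i - opr n Q v i) (col X k) = 0"
  proof
    fix k assume "k \<in> K"
    have "vinner n (\<lambda>i. v i - opr n Q v i) (col X k) = vinner n (\<lambda>i. v i - opr n Q v i) (opr n Q (col X k))"
      by (rule vinner_cong) (use assms \<open>k\<in>K\<close> in \<open>auto simp: col_def\<close>)
    also have "\<dots> = 0" using assms by (intro resid_orth_opr)
    finally show "vinner n (\<lambda>i. v i - opr n Q v i) (col X k) = 0" .
  qed
  show ?thesis unfolding proj_def
  proof (rule the_equality)
    show "opr n Q v \<in> colspan n X K \<and> (\<forall>k\<in>K. vinner n (\<lambda>i. v i - opr n Q v i) (col X k) = 0)"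
      using sp orth by blast
    fix w assume w: "w \<in> colspan n X K \<and> (\<forall>k\<in>K. vinner n (\<lambda>i. v i - w i) (col X k) = 0)"
    define d where "d = (\<lambda>i. 1 * w i + (-1) * opr n Q v i)"
    have dsp: "d \<in> colspan n X K" unfolding d_def using w sp by (intro colspan_comb) auto
    then obtain a where a: "\<forall>i<n. d i = (\<Sum>k\<in>K. a k * X i k)" by (auto simp: colspan_iff)
    have dorth: "vinner n d (col X k) = 0" if "k \<in> K" for k
    proof -
      have "vinner n d (col X k) = vinner n (\<lambda>i. v i - opr n Q v i) (col X k) - vinner n (\<lambda>i. v i - w i) (col X k)"
        unfolding d_def vinner_diff_left[symmetric] by (rule vinner_cong) auto
      with w orth that show ?thesis by simp
    qed
    have "vinner n d d = vinner n d (\<lambda>i. \<Sum>k\<in>K. a k * X i k)"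
      by (rule vinner_cong) (use a in auto)
    also have "\<dots> = (\<Sum>k\<in>K. a k * vinner n d (col X k))"
      unfolding vinner_def col_def by (simp add: sum_distrib_left mult_ac) (rule sum.swap)
    also have "\<dots> = 0" using dorth by simp
    finally have "\<forall>i<n. d i = 0" by (simp add: vinner_self_eq_0)
    moreover have "\<forall>i. n \<le> i \<longrightarrow> d i = 0" using dsp by (simp add: colspan_iff)
    ultimately show "w = opr n Q v" by (auto simp: d_def fun_eq_iff) (metis not_less)
  qed
qed

lemma t1:
  fixes s a b x d :: real
  assumes dp: "d > 0" and s: "s > 0"
  shows "(x - a * s\<^sup>2 / d)\<^sup>2 / (2 * (s\<^sup>2 / d)) = x\<^sup>2 * d / (2 * s\<^sup>2) - a * x + a\<^sup>2 * s\<^sup>2 / (2 * d)"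
proof -
  have "(x - a * s\<^sup>2 / d)\<^sup>2 = x\<^sup>2 - 2 * a * x * s\<^sup>2 / d + a\<^sup>2 * s\<^sup>2 * s\<^sup>2 / d\<^sup>2"
    using dp by (simp add: power2_eq_square field_simps)
  then show ?thesis using dp s by (simp add: power2_eq_square field_simps)
qed

lemma gauss_pointwise:
  fixes s a b x :: real
  assumes s: "s > 0" and d: "1 - 2 * b * s\<^sup>2 > 0"
  shows "exp (a * x + b * x\<^sup>2) * normal_density 0 s x =
    (exp (a\<^sup>2 * s\<^sup>2 / (2 * (1 - 2 * b * s\<^sup>2))) / sqrt (1 - 2 * b * s\<^sup>2)) *
    normal_density (a * s\<^sup>2 / (1 - 2 * b * s\<^sup>2)) (s / sqrt (1 - 2 * b * s\<^sup>2)) x"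
proof -
  define d where "d = 1 - 2 * b * s\<^sup>2"
  have dp: "d > 0" using d by (simp add: d_def)
  have s2: "(s / sqrt d)\<^sup>2 = s\<^sup>2 / d" using dp by (simp add: power_divide)
  have 2: "x\<^sup>2 * d / (2 * s\<^sup>2) = x\<^sup>2 / (2 * s\<^sup>2) - b * x\<^sup>2"
  proof -
    have "x\<^sup>2 * d / (2 * s\<^sup>2) = x\<^sup>2 / (2 * s\<^sup>2) - x\<^sup>2 * (2 * b * s\<^sup>2) / (2 * s\<^sup>2)"
      unfolding d_def by (simp add: diff_divide_distrib right_diff_distrib)
    also have "x\<^sup>2 * (2 * b * s\<^sup>2) / (2 * s\<^sup>2) = b * x\<^sup>2" using s by simp
    finally show ?thesis .
  qed
  have e: "a * x + b * x\<^sup>2 + (- (x - 0)\<^sup>2 / (2 * s\<^sup>2)) =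
      a\<^sup>2 * s\<^sup>2 / (2 * d) + (- (x - a * s\<^sup>2 / d)\<^sup>2 / (2 * (s\<^sup>2 / d)))"
  proof -
    have L: "- (x - 0)\<^sup>2 / (2 * s\<^sup>2) = - (x\<^sup>2 / (2 * s\<^sup>2))" by simp
    have R: "- (x - a * s\<^sup>2 / d)\<^sup>2 / (2 * (s\<^sup>2 / d)) = - ((x - a * s\<^sup>2 / d)\<^sup>2 / (2 * (s\<^sup>2 / d)))"
      by (rule minus_divide_left[symmetric])
    show ?thesis unfolding L R using t1[OF dp s, of x a] 2 by linarith
  qed
  have sq: "sqrt (2 * pi * (s\<^sup>2 / d)) = sqrt (2 * pi * s\<^sup>2) / sqrt d"
    using dp by (simp add: real_sqrt_divide)
  have "exp (a * x + b * x\<^sup>2) * normal_density 0 s x =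
      1 / sqrt (2 * pi * s\<^sup>2) * exp (a * x + b * x\<^sup>2 + (- (x - 0)\<^sup>2 / (2 * s\<^sup>2)))"
    unfolding normal_density_def exp_add by (simp only: mult_ac)
  also have "\<dots> = 1 / sqrt (2 * pi * s\<^sup>2) * (exp (a\<^sup>2 * s\<^sup>2 / (2 * d)) * exp (- (x - a * s\<^sup>2 / d)\<^sup>2 / (2 * (s\<^sup>2 / d))))"
    by (simp only: e exp_add)
  also have "\<dots> = (exp (a\<^sup>2 * s\<^sup>2 / (2 * d)) / sqrt d) *
    (1 / sqrt (2 * pi * (s / sqrt d)\<^sup>2) * exp (- (x - a * s\<^sup>2 / d)\<^sup>2 / (2 * (s / sqrt d)\<^sup>2)))"
    unfolding s2 sq using dp by simp
  finally show ?thesis unfolding d_def normal_density_def .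
qed

lemma nn_integral_normal_density: "s > 0 \<Longrightarrow> (\<integral>\<^sup>+x. ennreal (normal_density m s x) \<partial>lborel) = 1"
  by (subst nn_integral_eq_integral) (auto simp: integrable_normal_density)

lemma gauss_nn_integral:
  fixes s a b :: real
  assumes s: "s > 0" and d: "1 - 2 * b * s\<^sup>2 > 0"
  shows "(\<integral>\<^sup>+x. ennreal (normal_density 0 s x) * ennreal (exp (a * x + b * x\<^sup>2)) \<partial>lborel) =
    ennreal (exp (a\<^sup>2 * s\<^sup>2 / (2 * (1 - 2 * b * s\<^sup>2))) / sqrt (1 - 2 * b * s\<^sup>2))"
proof -
  define K where "K = exp (a\<^sup>2 * s\<^sup>2 / (2 * (1 - 2 * b * s\<^sup>2))) / sqrt (1 - 2 * b * s\<^sup>2)"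
  have K: "K \<ge> 0" using d by (simp add: K_def)
  have "(\<integral>\<^sup>+x. ennreal (normal_density 0 s x) * ennreal (exp (a * x + b * x\<^sup>2)) \<partial>lborel) =
     (\<integral>\<^sup>+x. ennreal K * ennreal (normal_density (a * s\<^sup>2 / (1 - 2 * b * s\<^sup>2)) (s / sqrt (1 - 2 * b * s\<^sup>2)) x) \<partial>lborel)"
    using gauss_pointwise[OF s d, of a] K
    by (intro nn_integral_cong) (simp add: ennreal_mult'[symmetric] K_def mult.commute)
  also have "\<dots> = ennreal K * 1"
    using s d by (subst nn_integral_cmult) (auto simp: nn_integral_normal_density)
  finally show ?thesis by (simp add: K_def)
qed

context prob_space begin

lemma nn_exp_normal:
  assumes D: "distributed M lborel Y (normal_density 0 s)" and s: "s > 0" and d: "1 - 2 * b * s\<^sup>2 > 0"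
  shows "(\<integral>\<^sup>+\<omega>. ennreal (exp (a * Y \<omega> + b * (Y \<omega>)\<^sup>2)) \<partial>M) =
    ennreal (exp (a\<^sup>2 * s\<^sup>2 / (2 * (1 - 2 * b * s\<^sup>2))) / sqrt (1 - 2 * b * s\<^sup>2))"
  using distributed_nn_integral[OF D, of "\<lambda>x. ennreal (exp (a * x + b * x\<^sup>2))"] gauss_nn_integral[OF s d, of a]
  by simp

lemma nn_prod_exp:
  assumes I: "finite I" and ind: "indep_vars (\<lambda>_. borel) X I"
    and D: "\<And>i. i \<in> I \<Longrightarrow> distributed M lborel (X i) (normal_density 0 s)"
    and s: "s > 0" and d: "1 - 2 * b * s\<^sup>2 > 0"
  shows "(\<integral>\<^sup>+\<omega>. ennreal (exp (\<Sum>i\<in>I. a i * X i \<omega> + b * (X i \<omega>)\<^sup>2)) \<partial>M) =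
    ennreal (\<Prod>i\<in>I. exp ((a i)\<^sup>2 * s\<^sup>2 / (2 * (1 - 2 * b * s\<^sup>2))) / sqrt (1 - 2 * b * s\<^sup>2))"
proof -
  have ind2: "indep_vars (\<lambda>_. borel) (\<lambda>i \<omega>. ennreal (exp (a i * X i \<omega> + b * (X i \<omega>)\<^sup>2))) I"
    by (rule indep_vars_compose2[OF ind, where Y="\<lambda>i x. ennreal (exp (a i * x + b * x\<^sup>2))"]) simp
  have "(\<integral>\<^sup>+\<omega>. ennreal (exp (\<Sum>i\<in>I. a i * X i \<omega> + b * (X i \<omega>)\<^sup>2)) \<partial>M) =
      (\<integral>\<^sup>+\<omega>. (\<Prod>i\<in>I. ennreal (exp (a i * X i \<omega> + b * (X i \<omega>)\<^sup>2))) \<partial>M)"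
    using I by (intro nn_integral_cong) (simp add: exp_sum prod_ennreal)
  also have "\<dots> = (\<Prod>i\<in>I. \<integral>\<^sup>+\<omega>. ennreal (exp (a i * X i \<omega> + b * (X i \<omega>)\<^sup>2)) \<partial>M)"
    by (rule indep_vars_nn_integral[OF I ind2]) simp
  also have "\<dots> = (\<Prod>i\<in>I. ennreal (exp ((a i)\<^sup>2 * s\<^sup>2 / (2 * (1 - 2 * b * s\<^sup>2))) / sqrt (1 - 2 * b * s\<^sup>2)))"
    by (intro prod.cong refl nn_exp_normal D s d)
  also have "\<dots> = ennreal (\<Prod>i\<in>I. exp ((a i)\<^sup>2 * s\<^sup>2 / (2 * (1 - 2 * b * s\<^sup>2))) / sqrt (1 - 2 * b * s\<^sup>2))"
    using d by (intro prod_ennreal) simp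
  finally show ?thesis .
qed

end

definition gsQ :: "nat \<Rightarrow> (nat \<Rightarrow> nat \<Rightarrow> real) \<Rightarrow> nat set \<Rightarrow> (nat \<Rightarrow> real) set" where
  "gsQ n X K = (SOME Q. finite Q \<and> card Q \<le> card K \<and> orthonormal n Q \<and> Q \<subseteq> colspan n X K \<and>
     (\<forall>k\<in>K. \<forall>i<n. X i k = opr n Q (col X k) i))"

lemma gsQ:
  assumes "finite K"
  shows "finite (gsQ n X K)" "card (gsQ n X K) \<le> card K" "orthonormal n (gsQ n X K)"
    "gsQ n X K \<subseteq> colspan n X K" "\<forall>k\<in>K. \<forall>i<n. X i k = opr n (gsQ n X K) (col X k) i"
proof -
  let ?P = "\<lambda>Q. finite Q \<and> card Q \<le> card K \<and> orthonormal n Q \<and> Q \<subseteq> colspan n X K \<and>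
     (\<forall>k\<in>K. \<forall>i<n. X i k = opr n Q (col X k) i)"
  have "?P (gsQ n X K)" unfolding gsQ_def by (rule someI_ex) (rule gram_schmidt[OF assms])
  then show "finite (gsQ n X K)" "card (gsQ n X K) \<le> card K" "orthonormal n (gsQ n X K)"
    "gsQ n X K \<subseteq> colspan n X K" "\<forall>k\<in>K. \<forall>i<n. X i k = opr n (gsQ n X K) (col X k) i" by auto
qed

lemma proj_gsQ: "finite K \<Longrightarrow> proj n X K v = opr n (gsQ n X K) v"
  using gsQ[of K n X] by (intro proj_eq) auto

lemma opr_add: "opr n Q (\<lambda>i. u i + v i) i = opr n Q u i + opr n Q v i"
  unfolding opr_def lc_def by (simp add: vinner_add_left algebra_simps sum.distrib)

lemma pythag:
  assumes "orthonormal n Q" "finite Q"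
  shows "vinner n v v = vinner n (opr n Q v) (opr n Q v) + vinner n (\<lambda>i. v i - opr n Q v i) (\<lambda>i. v i - opr n Q v i)"
proof -
  let ?r = "\<lambda>i. v i - opr n Q v i"
  have v: "vinner n v v = vinner n (\<lambda>i. opr n Q v i + ?r i) (\<lambda>i. opr n Q v i + ?r i)"
    by (rule vinner_cong) auto
  have o: "vinner n ?r (opr n Q v) = 0" using assms by (rule resid_orth_opr)
  have o': "vinner n (opr n Q v) ?r = 0" using o by (simp only: vinner_sym[of n ?r])
  show ?thesis unfolding v vinner_add_left vinner_add_right o o' by simp
qed

lemma resid_inner:
  assumes "orthonormal n Q" "finite Q"
  shows "vinner n (\<lambda>i. v i - opr n Q v i) w = vinner n (\<lambda>i. v i - opr n Q v i) (\<lambda>i. w i - opr n Q w i)"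
  using resid_orth_opr[OF assms, of v w] by (simp add: vinner_diff_right)

lemma cauchy_schwarz: "(vinner n u v)\<^sup>2 \<le> vinner n u u * vinner n v v"
  unfolding vinner_def using Cauchy_Schwarz_ineq_sum[of u v "{..<n}"] by (simp add: power2_eq_square)

lemma abs_vinner_le: "\<bar>vinner n u v\<bar> \<le> sqrt (vinner n u u) * sqrt (vinner n v v)"
proof -
  have "\<bar>vinner n u v\<bar> = sqrt ((vinner n u v)\<^sup>2)" by simp
  also have "\<dots> \<le> sqrt (vinner n u u * vinner n v v)" by (rule real_sqrt_le_mono[OF cauchy_schwarz])
  finally show ?thesis by (simp add: real_sqrt_mult)
qed

lemma opr_norm_le:
  assumes "orthonormal n Q" "finite Q" "\<And>q. q \<in> Q \<Longrightarrow> \<bar>vinner n v q\<bar> \<le> h"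
  shows "vinner n (opr n Q v) (opr n Q v) \<le> real (card Q) * h\<^sup>2"
proof -
  have "vinner n (opr n Q v) (opr n Q v) = (\<Sum>q\<in>Q. (vinner n v q)\<^sup>2)" using assms(1,2) by (rule opr_norm)
  also have "\<dots> \<le> (\<Sum>q\<in>Q. h\<^sup>2)"
    using assms(3) by (intro sum_mono) (metis abs_ge_zero power2_abs power_mono)
  finally show ?thesis by simp
qed

context prob_space begin

lemma tail_from_nn:
  assumes A: "A \<in> events" and f: "f \<in> borel_measurable M"
    and pt: "\<And>\<omega>. \<omega> \<in> A \<Longrightarrow> 1 \<le> f \<omega>" and nn: "\<And>\<omega>. 0 \<le> f \<omega>"
    and I: "(\<integral>\<^sup>+\<omega>. ennreal (f \<omega>) \<partial>M) \<le> ennreal B" and B: "0 \<le> B"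
  shows "prob A \<le> B"
proof -
  have "emeasure M A = (\<integral>\<^sup>+\<omega>. indicator A \<omega> \<partial>M)" using A by simp
  also have "\<dots> \<le> (\<integral>\<^sup>+\<omega>. ennreal (f \<omega>) \<partial>M)"
    using pt nn by (intro nn_integral_mono) (auto split: split_indicator)
  also have "\<dots> \<le> ennreal B" by (rule I)
  finally have "ennreal (prob A) \<le> ennreal B" using A by (simp add: emeasure_eq_measure)
  then show ?thesis using B by (simp add: ennreal_le_iff)
qed

lemma chernoff_lin:
  assumes I: "finite I" and ind: "indep_vars (\<lambda>_. borel) X I"
    and D: "\<And>i. i \<in> I \<Longrightarrow> distributed M lborel (X i) (normal_density 0 s)"
    and s: "s > 0" and t: "t > 0" and V: "V > 0" and uV: "(\<Sum>i\<in>I. (u i)\<^sup>2) \<le> V"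
  shows "prob {\<omega> \<in> space M. t \<le> (\<Sum>i\<in>I. u i * X i \<omega>)} \<le> exp (- t\<^sup>2 / (2 * s\<^sup>2 * V))"
proof -
  have rv[measurable]: "X i \<in> borel_measurable M" if "i \<in> I" for i
    using ind that unfolding indep_vars_def by auto
  define l where "l = t / (s\<^sup>2 * V)"
  have lpos: "l > 0" using s t V by (simp add: l_def)
  have fm: "(\<lambda>\<omega>. \<Sum>i\<in>I. u i * X i \<omega>) \<in> borel_measurable M"
    using rv by (intro borel_measurable_sum borel_measurable_times measurable_const) auto
  have A: "{\<omega> \<in> space M. t \<le> (\<Sum>i\<in>I. u i * X i \<omega>)} \<in> events"
    using fm by measurable
  define f where "f \<omega> = exp (- l * t) * exp (\<Sum>i\<in>I. l * u i * X i \<omega> + 0 * (X i \<omega>)\<^sup>2)" for \<omega>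
  have f_eq: "f \<omega> = exp (l * ((\<Sum>i\<in>I. u i * X i \<omega>) - t))" for \<omega>
    by (simp add: f_def exp_add[symmetric] sum_distrib_left algebra_simps mult.assoc)
  have "(\<integral>\<^sup>+\<omega>. ennreal (f \<omega>) \<partial>M) = ennreal (exp (- l * t)) *
        (\<integral>\<^sup>+\<omega>. ennreal (exp (\<Sum>i\<in>I. l * u i * X i \<omega> + 0 * (X i \<omega>)\<^sup>2)) \<partial>M)"
  proof -
    have gm: "(\<lambda>\<omega>. ennreal (exp (\<Sum>i\<in>I. l * u i * X i \<omega> + 0 * (X i \<omega>)\<^sup>2))) \<in> borel_measurable M"
      by measurable
    have "(\<integral>\<^sup>+\<omega>. ennreal (f \<omega>) \<partial>M) = (\<integral>\<^sup>+\<omega>. ennreal (exp (- l * t)) * ennreal (exp (\<Sum>i\<in>I. l * u i * X i \<omega> + 0 * (X i \<omega>)\<^sup>2)) \<partial>M)"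
      unfolding f_def by (intro nn_integral_cong) (simp add: ennreal_mult')
    also have "\<dots> = ennreal (exp (- l * t)) * (\<integral>\<^sup>+\<omega>. ennreal (exp (\<Sum>i\<in>I. l * u i * X i \<omega> + 0 * (X i \<omega>)\<^sup>2)) \<partial>M)"
      by (rule nn_integral_cmult[OF gm])
    finally show ?thesis .
  qed
  also have "(\<integral>\<^sup>+\<omega>. ennreal (exp (\<Sum>i\<in>I. l * u i * X i \<omega> + 0 * (X i \<omega>)\<^sup>2)) \<partial>M) =
      ennreal (\<Prod>i\<in>I. exp ((l * u i)\<^sup>2 * s\<^sup>2 / (2 * (1 - 2 * 0 * s\<^sup>2))) / sqrt (1 - 2 * 0 * s\<^sup>2))"
    by (rule nn_prod_exp[OF I ind D s]) auto
  also have "(\<Prod>i\<in>I. exp ((l * u i)\<^sup>2 * s\<^sup>2 / (2 * (1 - 2 * 0 * s\<^sup>2))) / sqrt (1 - 2 * 0 * s\<^sup>2)) =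
      exp (l\<^sup>2 * s\<^sup>2 / 2 * (\<Sum>i\<in>I. (u i)\<^sup>2))"
  proof -
    have "(\<Prod>i\<in>I. exp ((l * u i)\<^sup>2 * s\<^sup>2 / (2 * (1 - 2 * 0 * s\<^sup>2))) / sqrt (1 - 2 * 0 * s\<^sup>2)) =
        (\<Prod>i\<in>I. exp (l\<^sup>2 * s\<^sup>2 / 2 * (u i)\<^sup>2))"
      by (intro prod.cong refl) (simp add: power_mult_distrib mult_ac)
    also have "\<dots> = exp (\<Sum>i\<in>I. l\<^sup>2 * s\<^sup>2 / 2 * (u i)\<^sup>2)" using I by (simp add: exp_sum)
    finally show ?thesis by (simp add: sum_distrib_left)
  qed
  also have "ennreal (exp (- l * t)) * ennreal (exp (l\<^sup>2 * s\<^sup>2 / 2 * (\<Sum>i\<in>I. (u i)\<^sup>2))) \<le>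
      ennreal (exp (- l * t)) * ennreal (exp (l\<^sup>2 * s\<^sup>2 / 2 * V))"
    using uV lpos s by (intro mult_left_mono ennreal_leI) (auto intro!: mult_left_mono)
  also have "ennreal (exp (- l * t)) * ennreal (exp (l\<^sup>2 * s\<^sup>2 / 2 * V)) = ennreal (exp (- t\<^sup>2 / (2 * s\<^sup>2 * V)))"
  proof -
    have "- l * t + l\<^sup>2 * s\<^sup>2 / 2 * V = - t\<^sup>2 / (2 * s\<^sup>2 * V)"
      using s V unfolding l_def by (simp add: field_simps power2_eq_square)
    then show ?thesis by (simp add: ennreal_mult'[symmetric] exp_add[symmetric])
  qed
  finally have I2: "(\<integral>\<^sup>+\<omega>. ennreal (f \<omega>) \<partial>M) \<le> ennreal (exp (- t\<^sup>2 / (2 * s\<^sup>2 * V)))" .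
  show ?thesis
  proof (rule tail_from_nn[OF A _ _ _ I2])
    show "0 \<le> exp (- t\<^sup>2 / (2 * s\<^sup>2 * V))" by simp
    show "f \<in> borel_measurable M" unfolding f_eq using fm by measurable
    show "1 \<le> f \<omega>" if "\<omega> \<in> {\<omega> \<in> space M. t \<le> (\<Sum>i\<in>I. u i * X i \<omega>)}" for \<omega>
      using that lpos unfolding f_eq by auto
    show "0 \<le> f \<omega>" for \<omega> unfolding f_eq by simp
  qed
qed

lemma chernoff_sq:
  assumes I: "finite I" and ind: "indep_vars (\<lambda>_. borel) X I"
    and D: "\<And>i. i \<in> I \<Longrightarrow> distributed M lborel (X i) (normal_density 0 s)"
    and s: "s > 0" and d: "1 - 2 * b * s\<^sup>2 > 0"
  shows "prob {\<omega> \<in> space M. b * a \<le> b * (\<Sum>i\<in>I. (X i \<omega>)\<^sup>2)} \<le> exp (- b * a) * (1 / sqrt (1 - 2 * b * s\<^sup>2)) ^ card I"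
proof -
  have rv[measurable]: "X i \<in> borel_measurable M" if "i \<in> I" for i
    using ind that unfolding indep_vars_def by auto
  have fm: "(\<lambda>\<omega>. \<Sum>i\<in>I. (X i \<omega>)\<^sup>2) \<in> borel_measurable M" by measurable
  have A: "{\<omega> \<in> space M. b * a \<le> b * (\<Sum>i\<in>I. (X i \<omega>)\<^sup>2)} \<in> events"
    using fm by measurable
  define f where "f \<omega> = exp (- b * a) * exp (\<Sum>i\<in>I. 0 * X i \<omega> + b * (X i \<omega>)\<^sup>2)" for \<omega>
  have f_eq: "f \<omega> = exp (b * (\<Sum>i\<in>I. (X i \<omega>)\<^sup>2) - b * a)" for \<omega>
    by (simp add: f_def exp_add[symmetric] sum_distrib_left algebra_simps)
  have gm: "(\<lambda>\<omega>. ennreal (exp (\<Sum>i\<in>I. 0 * X i \<omega> + b * (X i \<omega>)\<^sup>2))) \<in> borel_measurable M"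
    by measurable
  have "(\<integral>\<^sup>+\<omega>. ennreal (f \<omega>) \<partial>M) = (\<integral>\<^sup>+\<omega>. ennreal (exp (- b * a)) * ennreal (exp (\<Sum>i\<in>I. 0 * X i \<omega> + b * (X i \<omega>)\<^sup>2)) \<partial>M)"
    unfolding f_def by (intro nn_integral_cong) (simp add: ennreal_mult')
  also have "\<dots> = ennreal (exp (- b * a)) * (\<integral>\<^sup>+\<omega>. ennreal (exp (\<Sum>i\<in>I. 0 * X i \<omega> + b * (X i \<omega>)\<^sup>2)) \<partial>M)"
    by (rule nn_integral_cmult[OF gm])
  also have "(\<integral>\<^sup>+\<omega>. ennreal (exp (\<Sum>i\<in>I. 0 * X i \<omega> + b * (X i \<omega>)\<^sup>2)) \<partial>M) =
      ennreal (\<Prod>i\<in>I. exp (0\<^sup>2 * s\<^sup>2 / (2 * (1 - 2 * b * s\<^sup>2))) / sqrt (1 - 2 * b * s\<^sup>2))"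
    by (rule nn_prod_exp[OF I ind D s d])
  also have "(\<Prod>i\<in>I. exp (0\<^sup>2 * s\<^sup>2 / (2 * (1 - 2 * b * s\<^sup>2))) / sqrt (1 - 2 * b * s\<^sup>2)) =
      (1 / sqrt (1 - 2 * b * s\<^sup>2)) ^ card I" by simp
  also have "ennreal (exp (- b * a)) * ennreal ((1 / sqrt (1 - 2 * b * s\<^sup>2)) ^ card I) =
     ennreal (exp (- b * a) * (1 / sqrt (1 - 2 * b * s\<^sup>2)) ^ card I)"
    using d by (simp add: ennreal_mult'[symmetric])
  finally have I2: "(\<integral>\<^sup>+\<omega>. ennreal (f \<omega>) \<partial>M) \<le> ennreal (exp (- b * a) * (1 / sqrt (1 - 2 * b * s\<^sup>2)) ^ card I)"
    by simp
  show ?thesis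
  proof (rule tail_from_nn[OF A _ _ _ I2])
    show "0 \<le> exp (- b * a) * (1 / sqrt (1 - 2 * b * s\<^sup>2)) ^ card I" using d by simp
    show "f \<in> borel_measurable M" unfolding f_eq using fm by measurable
    show "1 \<le> f \<omega>" if "\<omega> \<in> {\<omega> \<in> space M. b * a \<le> b * (\<Sum>i\<in>I. (X i \<omega>)\<^sup>2)}" for \<omega>
      using that unfolding f_eq by auto
    show "0 \<le> f \<omega>" for \<omega> unfolding f_eq by simp
  qed
qed

end

definition resid_sig :: "nat \<Rightarrow> nat \<Rightarrow> (nat \<Rightarrow> nat \<Rightarrow> real) \<Rightarrow> real \<Rightarrow> (nat \<Rightarrow> real) \<Rightarrow> nat \<Rightarrow> nat \<Rightarrow> real" where
  "resid_sig n p X thr b j = (\<lambda>i. signal n p X b i - proj n X (Cset n p X thr j) (signal n p X b) i)"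

locale fixn =
  fixes n p :: nat and X :: "nat \<Rightarrow> nat \<Rightarrow> real" and b e :: "nat \<Rightarrow> real"
    and thr c2 \<alpha> Mb sN Cx \<eta> \<sigma> ka :: real
  assumes unit: "\<And>j. j < p \<Longrightarrow> vinner n (col X j) (col X j) = 1"
    and lam_gt: "\<And>j. j < p \<Longrightarrow> 1 - a_coef n p X thr j > \<alpha>"
    and apos: "\<alpha> > 0"
    and extra: "\<And>j k. j < p \<Longrightarrow> k \<in> supp p b - Cset n p X thr j \<Longrightarrow> k \<noteq> j \<Longrightarrow>
        \<bar>vinner n (PiX n p X thr j) (col X k)\<bar> \<le> c2"
    and thr0: "thr \<ge> 0" and c20: "c2 \<ge> 0"
    and Sne: "supp p b \<noteq> {}"
    and Mb: "\<And>j. j \<in> supp p b \<Longrightarrow> \<bar>b j\<bar> < Mb"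
    and cardS: "real (card (supp p b)) \<le> sN"
    and cardC: "\<And>j. j < p \<Longrightarrow> real (card (Cset n p X thr j)) \<le> Cx"
    and kapos: "ka > 0"
    and A6: "\<And>j. j < p \<Longrightarrow> \<not> supp p b \<subseteq> Cset n p X thr j \<Longrightarrow>
        1 < ka * (vinner n (resid_sig n p X thr b j) (resid_sig n p X thr b j) /
                  vinner n (signal n p X b) (signal n p X b))"
    and G1a: "\<And>k. k < p \<Longrightarrow> \<bar>vinner n (Xstar n p X thr k) e\<bar> \<le> \<eta> * sqrt (vinner n (Xstar n p X thr k) (Xstar n p X thr k))"
    and G2a: "\<And>k q. k < p \<Longrightarrow> q \<in> gsQ n X (Cset n p X thr k) \<Longrightarrow> \<bar>vinner n q e\<bar> \<le> \<eta> * sqrt (vinner n q q)"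
    and G3: "\<And>k. k < p \<Longrightarrow> \<bar>vinner n (resid_sig n p X thr b k) e\<bar> \<le>
        \<eta> * sqrt (vinner n (resid_sig n p X thr b k) (resid_sig n p X thr b k))"
    and G4: "\<sigma>\<^sup>2 / 4 \<le> vinner n e e" "vinner n e e \<le> 4 * \<sigma>\<^sup>2"
    and spos: "\<sigma> > 0" and eta0: "\<eta> \<ge> 0"
    and small1: "Cx * \<eta>\<^sup>2 \<le> \<sigma>\<^sup>2 / 8" and small2: "2 * \<eta>\<^sup>2 \<le> \<sigma>\<^sup>2 / 16"
    and Lpos: "\<alpha> * Min ((\<lambda>j. \<bar>b j\<bar>) ` supp p b) - sN * Mb * (thr + c2) - \<eta> > 0"
begin

abbreviation "S \<equiv> supp p b"
abbreviation "C j \<equiv> Cset n p X thr j"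
abbreviation "Q j \<equiv> gsQ n X (C j)"
abbreviation "f \<equiv> signal n p X b"
abbreviation "y \<equiv> resp n p X b e"
abbreviation "Xs j \<equiv> Xstar n p X thr j"
abbreviation "lam j \<equiv> 1 - a_coef n p X thr j"
abbreviation "bmin \<equiv> Min ((\<lambda>j. \<bar>b j\<bar>) ` S)"
abbreviation "nu \<equiv> sN * Mb * (thr + c2)"
abbreviation "rX j \<equiv> (\<lambda>i. col X j i - opr n (Q j) (col X j) i)"

lemma finS: "finite S" and S_sub: "S \<subseteq> {..<p}"
  by (auto simp: supp_def)

lemma finC: "finite (C j)"
  by (rule finite_subset[of _ "{..<p}"]) (auto simp: Cset_def)

lemma Qp: "finite (Q j)" "card (Q j) \<le> card (C j)" "orthonormal n (Q j)"
    "\<forall>k\<in>C j. \<forall>i<n. X i k = opr n (Q j) (col X k) i"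
  using gsQ[OF finC[of j], of n X] by auto

lemma proj_C: "proj n X (C j) v = opr n (Q j) v"
  by (rule proj_gsQ[OF finC])

lemma PiX_eq: "PiX n p X thr j = opr n (Q j) (col X j)"
  by (simp add: PiX_def proj_C)

lemma Xs_inner: "vinner n (Xs j) w = vinner n (rX j) w"
  by (rule vinner_cong) (auto simp: Xstar_def PiX_eq col_def)

lemma lam_eq: assumes "j < p" shows "lam j = vinner n (rX j) (rX j)"
proof -
  have "a_coef n p X thr j = vinner n (opr n (Q j) (col X j)) (opr n (Q j) (col X j))"
    using unit[OF assms] by (simp add: a_coef_def PiX_eq)
  moreover have "1 = vinner n (opr n (Q j) (col X j)) (opr n (Q j) (col X j)) + vinner n (rX j) (rX j)"
    using pythag[OF Qp(3) Qp(1), of "col X j"] unit[OF assms] by simp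
  ultimately show ?thesis by simp
qed

lemma lam_le1: assumes "j < p" shows "lam j \<le> 1"
  using unit[OF assms] vinner_self_nonneg[of n "PiX n p X thr j"] by (simp add: a_coef_def)

lemma lam_pos: assumes "j < p" shows "lam j > 0"
  using lam_gt[OF assms] apos by simp

lemma inner_self: assumes "j < p" shows "vinner n (Xs j) (col X j) = lam j"
  unfolding Xs_inner lam_eq[OF assms] by (rule resid_inner[OF Qp(3) Qp(1)])

lemma inner_C: assumes "l \<in> C j" shows "vinner n (Xs j) (col X l) = 0"
proof -
  have "vinner n (Xs j) (col X l) = vinner n (rX j) (opr n (Q j) (col X l))"
    unfolding Xs_inner by (rule vinner_cong) (use Qp(4) assms in \<open>auto simp: col_def\<close>)
  also have "\<dots> = 0" by (rule resid_orth_opr[OF Qp(3) Qp(1)])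
  finally show ?thesis .
qed

lemma inner_other:
  assumes "j < p" "l \<in> S" "l \<noteq> j"
  shows "\<bar>vinner n (Xs j) (col X l)\<bar> \<le> thr + c2"
proof (cases "l \<in> C j")
  case True then show ?thesis using inner_C thr0 c20 by simp
next
  case False
  have lp: "l < p" using assms(2) S_sub by auto
  have corr: "\<bar>corr n X j l\<bar> \<le> thr" using False lp assms(3)
    by (auto simp: Cset_def corr_def vinner_sym)
  have "vinner n (Xs j) (col X l) = corr n X j l - vinner n (PiX n p X thr j) (col X l)"
    unfolding Xs_inner vinner_diff_left corr_def PiX_eq ..
  moreover have "\<bar>vinner n (PiX n p X thr j) (col X l)\<bar> \<le> c2"
    using extra[OF assms(1), of l] False assms by auto
  ultimately show ?thesis using corr by linarith
qed

lemma G1: assumes "k < p" shows "\<bar>vinner n (Xs k) e\<bar> \<le> \<eta>"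
proof -
  have "vinner n (Xs k) (Xs k) = vinner n (rX k) (Xs k)" by (rule Xs_inner)
  also have "\<dots> = vinner n (Xs k) (rX k)" by (rule vinner_sym)
  also have "\<dots> = lam k" unfolding Xs_inner lam_eq[OF assms] ..
  finally have "sqrt (vinner n (Xs k) (Xs k)) \<le> 1" using lam_le1[OF assms] by simp
  then have "\<eta> * sqrt (vinner n (Xs k) (Xs k)) \<le> \<eta>" using eta0 by (simp add: mult_left_le)
  then show ?thesis using G1a[OF assms] by linarith
qed

lemma G2: assumes "k < p" "q \<in> Q k" shows "\<bar>vinner n q e\<bar> \<le> \<eta>"
proof -
  have "vinner n q q = 1" using Qp(3)[of k] assms(2) by (simp add: orthonormal_def)
  then show ?thesis using G2a[OF assms] by simp
qed

lemma f_eq: "i < n \<Longrightarrow> f i = (\<Sum>l\<in>S. b l * col X l i)"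
  by (simp add: signal_def col_def mult.commute)

lemma y_eq: assumes "i < n" shows "y i = f i + e i"
proof -
  have "(\<Sum>j<p. X i j * b j) = (\<Sum>j\<in>S. X i j * b j)"
    by (rule sum.mono_neutral_right) (auto simp: supp_def)
  then show ?thesis using assms by (simp add: resp_def signal_def)
qed

lemma inner_f: "vinner n w f = (\<Sum>l\<in>S. b l * vinner n w (col X l))"
proof -
  have "vinner n w f = vinner n w (\<lambda>i. \<Sum>l\<in>S. b l * col X l i)"
    by (rule vinner_cong) (auto simp: f_eq)
  also have "\<dots> = (\<Sum>l\<in>S. b l * vinner n w (col X l))"
    unfolding vinner_def by (simp add: sum_distrib_left mult_ac) (rule sum.swap)
  finally show ?thesis .
qed

lemma inner_y: "vinner n w y = vinner n w f + vinner n w e"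
proof -
  have "vinner n w y = vinner n w (\<lambda>i. f i + e i)" by (rule vinner_cong) (auto simp: y_eq)
  then show ?thesis by (simp add: vinner_add_right)
qed

lemma Mb_pos: "Mb > 0"
proof -
  obtain j where "j \<in> S" using Sne by auto
  then show ?thesis using Mb[of j] by linarith
qed

lemma nu_nonneg: "nu \<ge> 0"
  using cardS Mb_pos thr0 c20 by (intro mult_nonneg_nonneg) auto

lemma inner_f_bound:
  assumes "j < p"
  shows "\<bar>vinner n (Xs j) f - (if j \<in> S then b j * lam j else 0)\<bar> \<le> nu"
proof -
  have diff: "vinner n (Xs j) f - (if j \<in> S then b j * lam j else 0) = (\<Sum>l\<in>S - {j}. b l * vinner n (Xs j) (col X l))"
  proof (cases "j \<in> S")
    case True
    have "vinner n (Xs j) f = b j * vinner n (Xs j) (col X j) + (\<Sum>l\<in>S - {j}. b l * vinner n (Xs j) (col X l))"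
      unfolding inner_f using True finS by (simp add: sum.remove)
    then show ?thesis using True inner_self[OF assms] by simp
  next
    case False then show ?thesis by (simp add: inner_f)
  qed
  have "\<bar>\<Sum>l\<in>S - {j}. b l * vinner n (Xs j) (col X l)\<bar> \<le> (\<Sum>l\<in>S - {j}. Mb * (thr + c2))"
  proof (rule order_trans[OF sum_abs], rule sum_mono)
    fix l assume l: "l \<in> S - {j}"
    have "\<bar>b l * vinner n (Xs j) (col X l)\<bar> = \<bar>b l\<bar> * \<bar>vinner n (Xs j) (col X l)\<bar>" by (simp add: abs_mult)
    also have "\<dots> \<le> Mb * (thr + c2)"
      using Mb[of l] inner_other[OF assms, of l] l
      by (intro mult_mono) auto
    finally show "\<bar>b l * vinner n (Xs j) (col X l)\<bar> \<le> Mb * (thr + c2)" .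
  qed
  also have "\<dots> = real (card (S - {j})) * (Mb * (thr + c2))" by simp
  also have "\<dots> \<le> sN * (Mb * (thr + c2))"
  proof (rule mult_right_mono)
    have "card (S - {j}) \<le> card S" using finS by (intro card_mono) auto
    then show "real (card (S - {j})) \<le> sN" using cardS by linarith
    show "0 \<le> Mb * (thr + c2)" using Mb_pos thr0 c20 by simp
  qed
  finally show ?thesis unfolding diff by (simp add: mult.assoc)
qed

lemma inner_f_zero:
  assumes "S \<subseteq> C j" shows "vinner n (Xs j) f = 0"
  unfolding inner_f using assms inner_C by (auto intro!: sum.neutral)

lemma inner_y_bound:
  assumes "j < p"
  shows "\<bar>vinner n (Xs j) y - (if j \<in> S then b j * lam j else 0)\<bar> \<le> nu + \<eta>"
  using inner_f_bound[OF assms] G1[OF assms] unfolding inner_y by linarith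

lemma fnorm: "vinner n f f \<le> (sN * Mb)\<^sup>2"
proof -
  have "vinner n f f = (\<Sum>i<n. (\<Sum>l\<in>S. b l * X i l)\<^sup>2)"
    unfolding vinner_def by (intro sum.cong) (auto simp: f_eq col_def power2_eq_square)
  also have "\<dots> \<le> (\<Sum>i<n. (\<Sum>l\<in>S. (b l)\<^sup>2) * (\<Sum>l\<in>S. (X i l)\<^sup>2))"
    by (intro sum_mono Cauchy_Schwarz_ineq_sum)
  also have "\<dots> = (\<Sum>l\<in>S. (b l)\<^sup>2) * (\<Sum>l\<in>S. vinner n (col X l) (col X l))"
    unfolding vinner_def col_def by (simp add: sum_distrib_left power2_eq_square) (rule sum.swap)
  also have "(\<Sum>l\<in>S. vinner n (col X l) (col X l)) = real (card S)"
    using S_sub unit by (simp add: subset_eq)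
  also have "(\<Sum>l\<in>S. (b l)\<^sup>2) \<le> (\<Sum>l\<in>S. Mb\<^sup>2)"
    using Mb by (intro sum_mono) (metis abs_ge_zero power2_abs power_mono less_imp_le)
  then have "(\<Sum>l\<in>S. (b l)\<^sup>2) * real (card S) \<le> (real (card S) * Mb\<^sup>2) * real (card S)"
    by (intro mult_right_mono) auto
  also have "\<dots> = (real (card S) * Mb)\<^sup>2" by (simp add: power2_eq_square)
  also have "\<dots> \<le> (sN * Mb)\<^sup>2"
    using cardS Mb_pos by (intro power_mono mult_right_mono) auto
  finally show ?thesis .
qed

lemma ynorm: "vinner n y y \<le> 2 * vinner n f f + 8 * \<sigma>\<^sup>2"
proof -
  have "vinner n y y = (\<Sum>i<n. (f i + e i)\<^sup>2)"
    unfolding vinner_def by (intro sum.cong) (auto simp: y_eq power2_eq_square)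
  also have "\<dots> \<le> (\<Sum>i<n. 2 * (f i)\<^sup>2 + 2 * (e i)\<^sup>2)"
  proof (rule sum_mono)
    fix i
    have "0 \<le> (f i - e i)\<^sup>2" by simp
    then show "(f i + e i)\<^sup>2 \<le> 2 * (f i)\<^sup>2 + 2 * (e i)\<^sup>2" by (simp add: power2_eq_square algebra_simps)
  qed
  also have "\<dots> = 2 * vinner n f f + 2 * vinner n e e"
    by (simp add: vinner_def sum.distrib sum_distrib_left power2_eq_square)
  finally show ?thesis using G4(2) by linarith
qed

abbreviation "rv j v \<equiv> (\<lambda>i. v i - opr n (Q j) v i)"

lemma rsig_eq: "resid_sig n p X thr b j = rv j f"
  by (simp add: resid_sig_def proj_C)

lemma ry_eq: "i < n \<Longrightarrow> rv j y i = rv j f i + rv j e i"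
proof -
  assume i: "i < n"
  have "opr n (Q j) y = opr n (Q j) (\<lambda>i. f i + e i)" by (rule opr_cong) (simp add: y_eq)
  then show ?thesis using i by (simp add: opr_add y_eq)
qed

lemma re_norm: assumes "j < p" shows "vinner n (rv j e) (rv j e) \<ge> \<sigma>\<^sup>2 / 8"
proof -
  have "vinner n (opr n (Q j) e) (opr n (Q j) e) \<le> real (card (Q j)) * \<eta>\<^sup>2"
    using G2[OF assms] by (intro opr_norm_le[OF Qp(3) Qp(1)]) (simp add: vinner_sym)
  also have "\<dots> \<le> Cx * \<eta>\<^sup>2"
    using Qp(2)[of j] cardC[OF assms] by (intro mult_right_mono) auto
  finally have "vinner n (opr n (Q j) e) (opr n (Q j) e) \<le> \<sigma>\<^sup>2 / 8" using small1 by linarith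
  moreover have "vinner n e e = vinner n (opr n (Q j) e) (opr n (Q j) e) + vinner n (rv j e) (rv j e)"
    by (rule pythag[OF Qp(3) Qp(1)])
  ultimately show ?thesis using G4(1) by linarith
qed

lemma ry_norm: assumes "j < p"
  shows "vinner n (rv j y) (rv j y) \<ge> vinner n (rv j f) (rv j f) / 2 + \<sigma>\<^sup>2 / 16"
proof -
  define A where "A = sqrt (vinner n (rv j f) (rv j f))"
  have A0: "A \<ge> 0" unfolding A_def by (rule real_sqrt_ge_zero[OF vinner_self_nonneg])
  have A2: "A\<^sup>2 = vinner n (rv j f) (rv j f)" unfolding A_def by (rule real_sqrt_pow2[OF vinner_self_nonneg])
  have "vinner n (rv j y) (rv j y) = vinner n (\<lambda>i. rv j f i + rv j e i) (\<lambda>i. rv j f i + rv j e i)"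
    by (rule vinner_cong) (auto simp: ry_eq)
  also have "\<dots> = vinner n (rv j f) (rv j f) + 2 * vinner n (rv j f) (rv j e) + vinner n (rv j e) (rv j e)"
  proof -
    have "vinner n (rv j e) (rv j f) = vinner n (rv j f) (rv j e)" by (rule vinner_sym)
    then show ?thesis by (simp only: vinner_add_left vinner_add_right)
  qed
  finally have eq: "vinner n (rv j y) (rv j y) = A\<^sup>2 + 2 * vinner n (rv j f) (rv j e) + vinner n (rv j e) (rv j e)"
    using A2 by simp
  have "vinner n (rv j f) (rv j e) = vinner n (rv j f) e"
    by (rule resid_inner[OF Qp(3) Qp(1), symmetric])
  then have cr: "\<bar>vinner n (rv j f) (rv j e)\<bar> \<le> \<eta> * A"
    using G3[OF assms] unfolding rsig_eq A_def by simp
  have "0 \<le> (A - 2 * \<eta>)\<^sup>2" by simp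
  then have "2 * \<eta> * A \<le> A\<^sup>2 / 2 + 2 * \<eta>\<^sup>2" by (simp add: power2_eq_square algebra_simps)
  then show ?thesis using eq cr re_norm[OF assms] small2 A2 by linarith
qed

lemma ynorm_split: assumes "j < p"
  shows "vinner n y y = vinner n (opr n (Q j) y) (opr n (Q j) y) + vinner n (rv j y) (rv j y)"
  by (rule pythag[OF Qp(3) Qp(1)])

lemma ry_pos: assumes "j < p" shows "vinner n (rv j y) (rv j y) > 0"
proof -
  have "\<sigma>\<^sup>2 > 0" using spos by simp
  then show ?thesis using ry_norm[OF assms] vinner_self_nonneg[of n "rv j f"] by linarith
qed

lemma y_pos: assumes "j < p" shows "vinner n y y > 0"
  using ynorm_split[OF assms] ry_pos[OF assms] vinner_self_nonneg[of n "opr n (Q j) y"] by linarith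

lemma one_minus_ay: assumes "j < p"
  shows "1 - a_y n p X thr y j = vinner n (rv j y) (rv j y) / vinner n y y"
  using ynorm_split[OF assms] y_pos[OF assms] by (simp add: a_y_def proj_C field_simps)

lemma resc_bounds: assumes "j < p" shows "0 < resc s n p X thr y j" "resc s n p X thr y j \<le> 1"
proof -
  have r: "0 < vinner n (rv j y) (rv j y) / vinner n y y" "vinner n (rv j y) (rv j y) / vinner n y y \<le> 1"
    using ry_pos[OF assms] y_pos[OF assms] ynorm_split[OF assms] vinner_self_nonneg[of n "opr n (Q j) y"]
    by (auto simp: divide_le_eq_1)
  have l: "0 < lam j" "lam j \<le> 1" using lam_pos[OF assms] lam_le1[OF assms] by auto
  have m: "0 < lam j * (vinner n (rv j y) (rv j y) / vinner n y y)" "lam j * (vinner n (rv j y) (rv j y) / vinner n y y) \<le> 1"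
    subgoal by (rule mult_pos_pos) (use r l in auto)
    subgoal by (rule mult_le_one) (use r l in auto)
    done
  show "0 < resc s n p X thr y j"
    using m l by (cases s) (simp_all only: resc_def one_minus_ay[OF assms] rescale.case real_sqrt_gt_zero)
  show "resc s n p X thr y j \<le> 1"
    using m l by (cases s) (simp_all only: resc_def one_minus_ay[OF assms] rescale.case real_sqrt_le_1_iff)
qed

abbreviation "T s j \<equiv> tilted s n p X thr y j"
abbreviation "Lmin \<equiv> \<alpha> * bmin - nu - \<eta>"
abbreviation "Ub \<equiv> (nu + \<eta>) / \<alpha> + (nu + \<eta>) * sqrt (128 / (\<alpha> * min (1 / ka) 1))
   + \<eta> * sqrt (16 * (2 * (sN * Mb)\<^sup>2 + 8 * \<sigma>\<^sup>2) / (\<alpha> * \<sigma>\<^sup>2))"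

lemma bmin_le: "j \<in> S \<Longrightarrow> bmin \<le> \<bar>b j\<bar>"
  using finS by (intro Min_le) auto

lemma bmin_pos: "bmin > 0"
proof -
  have "\<alpha> * bmin > 0" using Lpos nu_nonneg eta0 by linarith
  then show ?thesis using apos by (simp add: zero_less_mult_iff)
qed

lemma T_def': "T s j = vinner n (Xs j) y / resc s n p X thr y j"
  by (simp add: tilted_def)

lemma T_lower: assumes "j \<in> S" shows "\<bar>T s j\<bar> \<ge> Lmin"
proof -
  have jp: "j < p" using assms S_sub by auto
  have "bmin * \<alpha> \<le> \<bar>b j\<bar> * lam j"
    using bmin_le[OF assms] lam_gt[OF jp] bmin_pos apos by (intro mult_mono) auto
  moreover have "\<bar>vinner n (Xs j) y - b j * lam j\<bar> \<le> nu + \<eta>"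
    using inner_y_bound[OF jp] assms by simp
  moreover have "\<bar>b j * lam j\<bar> = \<bar>b j\<bar> * lam j" using lam_pos[OF jp] by (simp add: abs_mult)
  ultimately have I: "\<bar>vinner n (Xs j) y\<bar> \<ge> Lmin" by (simp add: mult.commute)
  have r: "0 < resc s n p X thr y j" "resc s n p X thr y j \<le> 1" using resc_bounds[OF jp] by auto
  have "\<bar>vinner n (Xs j) y\<bar> \<le> \<bar>vinner n (Xs j) y\<bar> / resc s n p X thr y j"
    using r by (simp add: le_divide_eq mult_left_le)
  also have "\<dots> = \<bar>T s j\<bar>" using r by (simp add: T_def')
  finally show ?thesis using I by linarith
qed

lemma T_Lam: assumes "j \<in> S" shows "\<bar>T Lam j / b j - 1\<bar> \<le> (nu + \<eta>) / (\<alpha> * bmin)"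
proof -
  have jp: "j < p" using assms S_sub by auto
  have bj: "b j \<noteq> 0" using assms by (simp add: supp_def)
  have lp: "lam j > 0" using lam_pos[OF jp] .
  have "T Lam j / b j - 1 = (vinner n (Xs j) y - b j * lam j) / (lam j * b j)"
    using bj lp by (simp add: T_def' resc_def field_simps)
  then have "\<bar>T Lam j / b j - 1\<bar> = \<bar>vinner n (Xs j) y - b j * lam j\<bar> / (lam j * \<bar>b j\<bar>)"
    using lp by (simp add: abs_mult)
  also have "\<dots> \<le> (nu + \<eta>) / (\<alpha> * bmin)"
  proof (rule frac_le)
    show "0 \<le> nu + \<eta>" using nu_nonneg eta0 by simp
    show "\<bar>vinner n (Xs j) y - b j * lam j\<bar> \<le> nu + \<eta>" using inner_y_bound[OF jp] assms by simp
    show "0 < \<alpha> * bmin" using apos bmin_pos by simp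
    show "\<alpha> * bmin \<le> lam j * \<bar>b j\<bar>"
      using bmin_le[OF assms] lam_gt[OF jp] bmin_pos apos by (intro mult_mono) auto
  qed
  finally show ?thesis .
qed

lemma div_bound:
  fixes x c r L :: real
  assumes "\<bar>x\<bar> \<le> c" "0 < L" "L \<le> r\<^sup>2" "r > 0"
  shows "\<bar>x\<bar> / r \<le> c * sqrt (1 / L)"
proof -
  have "sqrt L \<le> r" using assms real_sqrt_le_mono[OF assms(3)] by simp
  then have "\<bar>x\<bar> / r \<le> \<bar>x\<bar> / sqrt L"
    using assms by (intro divide_left_mono) auto
  also have "\<dots> \<le> c / sqrt L" using assms by (intro divide_right_mono) auto
  finally show ?thesis by (simp add: divide_inverse real_sqrt_inverse)
qed

lemma T_upper: assumes "k < p" "k \<notin> S" shows "\<bar>T s k\<bar> \<le> Ub"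
proof -
  have xb: "\<bar>vinner n (Xs k) y\<bar> \<le> nu + \<eta>" using inner_y_bound[OF assms(1)] assms(2) by simp
  have r: "0 < resc s n p X thr y k" "resc s n p X thr y k \<le> 1" using resc_bounds[OF assms(1)] by auto
  have t1: "(nu + \<eta>) / \<alpha> \<ge> 0" and t2: "(nu + \<eta>) * sqrt (128 / (\<alpha> * min (1 / ka) 1)) \<ge> 0"
    and t3: "\<eta> * sqrt (16 * (2 * (sN * Mb)\<^sup>2 + 8 * \<sigma>\<^sup>2) / (\<alpha> * \<sigma>\<^sup>2)) \<ge> 0"
    using nu_nonneg eta0 apos kapos spos by (auto intro!: mult_nonneg_nonneg divide_nonneg_nonneg)
  let ?ry = "vinner n (rv k y) (rv k y)" and ?yy = "vinner n y y"
  have ryp: "?ry > 0" using ry_pos[OF assms(1)] .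
  have yyp: "?yy > 0" using y_pos[OF assms(1)] .
  have lk: "lam k > \<alpha>" using lam_gt[OF assms(1)] .
  show ?thesis
  proof (cases s)
    case Lam
    have "\<bar>T s k\<bar> = \<bar>vinner n (Xs k) y\<bar> / lam k" using Lam lam_pos[OF assms(1)] by (simp add: T_def' resc_def)
    also have "\<dots> \<le> (nu + \<eta>) / \<alpha>" using xb lk apos nu_nonneg eta0 by (intro frac_le) auto
    finally show ?thesis using t2 t3 by linarith
  next
    case BigLam
    have rsq: "(resc s n p X thr y k)\<^sup>2 = lam k * (?ry / ?yy)"
      using BigLam lam_pos[OF assms(1)] ryp yyp by (simp add: resc_def one_minus_ay[OF assms(1)])
    have Tk: "\<bar>T s k\<bar> = \<bar>vinner n (Xs k) y\<bar> / resc s n p X thr y k" using r by (simp add: T_def')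
    show ?thesis
    proof (cases "S \<subseteq> C k")
      case True
      have xb2: "\<bar>vinner n (Xs k) y\<bar> \<le> \<eta>" using inner_f_zero[OF True] G1[OF assms(1)] by (simp add: inner_y)
      define D where "D = 2 * (sN * Mb)\<^sup>2 + 8 * \<sigma>\<^sup>2"
      have Dp: "D > 0" using spos by (simp add: D_def add_nonneg_pos)
      have "?ry \<ge> \<sigma>\<^sup>2 / 16" using ry_norm[OF assms(1)] vinner_self_nonneg[of n "rv k f"] by linarith
      moreover have "?yy \<le> D" using ynorm fnorm by (simp add: D_def)
      ultimately have rat: "?ry / ?yy \<ge> (\<sigma>\<^sup>2 / 16) / D"
        using yyp spos ryp by (intro frac_le) auto
      have L: "\<alpha> * \<sigma>\<^sup>2 / (16 * D) \<le> (resc s n p X thr y k)\<^sup>2"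
      proof -
        have "\<alpha> * ((\<sigma>\<^sup>2 / 16) / D) \<le> lam k * (?ry / ?yy)"
          using rat lk apos Dp by (intro mult_mono) auto
        then show ?thesis unfolding rsq by (simp add: field_simps)
      qed
      have "\<bar>T s k\<bar> \<le> \<eta> * sqrt (1 / (\<alpha> * \<sigma>\<^sup>2 / (16 * D)))"
        unfolding Tk using xb2 L r apos spos Dp by (intro div_bound) auto
      also have "1 / (\<alpha> * \<sigma>\<^sup>2 / (16 * D)) = 16 * D / (\<alpha> * \<sigma>\<^sup>2)" by simp
      finally show ?thesis using t1 t2 by (simp add: D_def)
    next
      case False
      define m where "m = min (1 / ka) 1"
      have mp: "m > 0" "m \<le> 1" "m \<le> 1 / ka" using kapos by (auto simp: m_def)
      let ?Af = "vinner n (rv k f) (rv k f)" and ?Ff = "vinner n f f"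
      have A6': "1 < ka * (?Af / ?Ff)" using A6[OF assms(1) False] unfolding rsig_eq .
      have AF: "?Af \<ge> ?Ff / ka"
      proof (cases "?Ff = 0")
        case True then show ?thesis using vinner_self_nonneg[of n "rv k f"] by simp
      next
        case False
        then have Fp: "?Ff > 0" using vinner_self_nonneg[of n f] by linarith
        have "?Ff < ka * ?Af" using A6' Fp by (simp add: field_simps)
        then show ?thesis using kapos by (simp add: field_simps)
      qed
      have F0: "?Ff \<ge> 0" by (rule vinner_self_nonneg)
      have "?ry \<ge> ?Af / 2 + \<sigma>\<^sup>2 / 16" by (rule ry_norm[OF assms(1)])
      moreover have "?Af / 2 \<ge> m * ?Ff / 16"
      proof -
        have "m * ?Ff \<le> ?Ff / ka" using mult_right_mono[OF mp(3) F0] by simp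
        then show ?thesis using AF F0 mp by (simp add: field_simps) (smt (verit) mult_nonneg_nonneg)
      qed
      moreover have "\<sigma>\<^sup>2 / 16 \<ge> m * \<sigma>\<^sup>2 / 16" using mp by (simp add: mult_left_le_one_le)
      ultimately have ryl: "?ry \<ge> m / 16 * (?Ff + \<sigma>\<^sup>2)" by (simp add: algebra_simps)
      have yyu: "?yy \<le> 8 * (?Ff + \<sigma>\<^sup>2)" using ynorm F0 by simp
      have FS: "?Ff + \<sigma>\<^sup>2 > 0" using F0 spos by (simp add: add_nonneg_pos)
      have rat: "?ry / ?yy \<ge> (m / 16 * (?Ff + \<sigma>\<^sup>2)) / (8 * (?Ff + \<sigma>\<^sup>2))"
        using ryl yyu yyp FS mp ryp by (intro frac_le) auto
      also have "(m / 16 * (?Ff + \<sigma>\<^sup>2)) / (8 * (?Ff + \<sigma>\<^sup>2)) = m / 128"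
        using FS by (simp add: field_simps del: distrib_left distrib_right)
      finally have rat2: "?ry / ?yy \<ge> m / 128" .
      have L: "\<alpha> * m / 128 \<le> (resc s n p X thr y k)\<^sup>2"
      proof -
        have "\<alpha> * (m / 128) \<le> lam k * (?ry / ?yy)"
          using rat2 lk apos mp by (intro mult_mono) auto
        then show ?thesis unfolding rsq by simp
      qed
      have "\<bar>T s k\<bar> \<le> (nu + \<eta>) * sqrt (1 / (\<alpha> * m / 128))"
        unfolding Tk using xb L r apos mp by (intro div_bound) auto
      also have "1 / (\<alpha> * m / 128) = 128 / (\<alpha> * m)" by simp
      finally show ?thesis using t1 t3 by (simp add: m_def)
    qed
  qed
qed

end

context prob_space begin

lemma vec_tail:
  assumes ind: "indep_vars (\<lambda>_. borel) (\<lambda>i \<omega>. Z \<omega> i) {..<n}"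
    and D: "\<And>i. i < n \<Longrightarrow> distributed M lborel (\<lambda>\<omega>. Z \<omega> i) (normal_density 0 s)"
    and s: "s > 0" and eta: "\<eta> > 0"
  shows "prob {\<omega> \<in> space M. \<eta> * sqrt (vinner n u u) < \<bar>vinner n u (Z \<omega>)\<bar>} \<le> 2 * exp (- \<eta>\<^sup>2 / (2 * s\<^sup>2))"
proof (cases "vinner n u u = 0")
  case True
  then have "\<forall>i<n. u i = 0" by (simp add: vinner_self_eq_0)
  then have "\<And>\<omega>. vinner n u (Z \<omega>) = 0" by (simp add: vinner_def)
  then show ?thesis using True by simp
next
  case False
  define V where "V = vinner n u u"
  have Vp: "V > 0" using False vinner_self_nonneg[of n u] by (simp add: V_def)
  define t where "t = \<eta> * sqrt V"
  have tp: "t > 0" using eta Vp by (simp add: t_def)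
  have rv[measurable]: "(\<lambda>\<omega>. Z \<omega> i) \<in> borel_measurable M" if "i \<in> {..<n}" for i
    using ind that unfolding indep_vars_def by auto
  have eq1: "vinner n u (Z \<omega>) = (\<Sum>i\<in>{..<n}. u i * Z \<omega> i)" for \<omega> by (simp add: vinner_def)
  have eq2: "- vinner n u (Z \<omega>) = (\<Sum>i\<in>{..<n}. (- u i) * Z \<omega> i)" for \<omega> by (simp add: vinner_def sum_negf)
  have sumV: "(\<Sum>i\<in>{..<n}. (u i)\<^sup>2) \<le> V" "(\<Sum>i\<in>{..<n}. (- u i)\<^sup>2) \<le> V"
    by (simp_all add: V_def vinner_def power2_eq_square)
  have ex: "exp (- t\<^sup>2 / (2 * s\<^sup>2 * V)) = exp (- \<eta>\<^sup>2 / (2 * s\<^sup>2))"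
    using Vp by (simp add: t_def power_mult_distrib)
  have b1: "prob {\<omega> \<in> space M. t \<le> (\<Sum>i\<in>{..<n}. u i * Z \<omega> i)} \<le> exp (- \<eta>\<^sup>2 / (2 * s\<^sup>2))"
    using chernoff_lin[OF _ ind _ s tp Vp sumV(1)] D ex by simp
  have b2: "prob {\<omega> \<in> space M. t \<le> (\<Sum>i\<in>{..<n}. (- u i) * Z \<omega> i)} \<le> exp (- \<eta>\<^sup>2 / (2 * s\<^sup>2))"
    using chernoff_lin[OF _ ind _ s tp Vp sumV(2)] D ex by simp
  have m1: "{\<omega> \<in> space M. t \<le> (\<Sum>i\<in>{..<n}. u i * Z \<omega> i)} \<in> events" by measurable
  have m2: "{\<omega> \<in> space M. t \<le> (\<Sum>i\<in>{..<n}. (- u i) * Z \<omega> i)} \<in> events" by measurable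
  have sub: "{\<omega> \<in> space M. \<eta> * sqrt (vinner n u u) < \<bar>vinner n u (Z \<omega>)\<bar>} \<subseteq>
     {\<omega> \<in> space M. t \<le> (\<Sum>i\<in>{..<n}. u i * Z \<omega> i)} \<union> {\<omega> \<in> space M. t \<le> (\<Sum>i\<in>{..<n}. (- u i) * Z \<omega> i)}"
    unfolding eq1[symmetric] eq2[symmetric] t_def V_def by auto
  have "prob {\<omega> \<in> space M. \<eta> * sqrt (vinner n u u) < \<bar>vinner n u (Z \<omega>)\<bar>} \<le>
     prob ({\<omega> \<in> space M. t \<le> (\<Sum>i\<in>{..<n}. u i * Z \<omega> i)} \<union> {\<omega> \<in> space M. t \<le> (\<Sum>i\<in>{..<n}. (- u i) * Z \<omega> i)})"
    using m1 m2 sub by (intro finite_measure_mono) auto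
  also have "\<dots> \<le> prob {\<omega> \<in> space M. t \<le> (\<Sum>i\<in>{..<n}. u i * Z \<omega> i)} + prob {\<omega> \<in> space M. t \<le> (\<Sum>i\<in>{..<n}. (- u i) * Z \<omega> i)}"
    using m1 m2 by (rule measure_Un_le)
  finally show ?thesis using b1 b2 by linarith
qed

lemma union_tail:
  assumes ind: "indep_vars (\<lambda>_. borel) (\<lambda>i \<omega>. Z \<omega> i) {..<n}"
    and D: "\<And>i. i < n \<Longrightarrow> distributed M lborel (\<lambda>\<omega>. Z \<omega> i) (normal_density 0 s)"
    and s: "s > 0" and eta: "\<eta> > 0" and U: "finite U"
  shows "prob {\<omega> \<in> space M. \<exists>u\<in>U. \<eta> * sqrt (vinner n u u) < \<bar>vinner n u (Z \<omega>)\<bar>} \<le> real (card U) * (2 * exp (- \<eta>\<^sup>2 / (2 * s\<^sup>2)))"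
proof -
  have rv[measurable]: "(\<lambda>\<omega>. Z \<omega> i) \<in> borel_measurable M" if "i \<in> {..<n}" for i
    using ind that unfolding indep_vars_def by auto
  have ev: "{\<omega> \<in> space M. \<eta> * sqrt (vinner n u u) < \<bar>vinner n u (Z \<omega>)\<bar>} \<in> events" for u
    unfolding vinner_def by measurable
  have "{\<omega> \<in> space M. \<exists>u\<in>U. \<eta> * sqrt (vinner n u u) < \<bar>vinner n u (Z \<omega>)\<bar>} =
     (\<Union>u\<in>U. {\<omega> \<in> space M. \<eta> * sqrt (vinner n u u) < \<bar>vinner n u (Z \<omega>)\<bar>})" by auto
  also have "prob \<dots> \<le> (\<Sum>u\<in>U. prob {\<omega> \<in> space M. \<eta> * sqrt (vinner n u u) < \<bar>vinner n u (Z \<omega>)\<bar>})"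
    using U ev by (intro measure_UNION_le) auto
  also have "\<dots> \<le> (\<Sum>u\<in>U. 2 * exp (- \<eta>\<^sup>2 / (2 * s\<^sup>2)))"
    by (intro sum_mono vec_tail[OF ind D s eta]) auto
  finally show ?thesis by simp
qed

lemma sq_tails:
  assumes ind: "indep_vars (\<lambda>_. borel) (\<lambda>i \<omega>. Z \<omega> i) {..<n}"
    and D: "\<And>i. i < n \<Longrightarrow> distributed M lborel (\<lambda>\<omega>. Z \<omega> i) (normal_density 0 (\<sigma> / sqrt (real n)))"
    and sig: "\<sigma> > 0" and n: "n > 0"
  shows "prob {\<omega> \<in> space M. vinner n (Z \<omega>) (Z \<omega>) < \<sigma>\<^sup>2 / 4} \<le> exp (real n / 4) * (1 / sqrt 3) ^ n"
    "prob {\<omega> \<in> space M. 4 * \<sigma>\<^sup>2 < vinner n (Z \<omega>) (Z \<omega>)} \<le> exp (- real n) * (1 / sqrt (1 / 2)) ^ n"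
proof -
  define s where "s = \<sigma> / sqrt (real n)"
  have sp: "s > 0" using sig n by (simp add: s_def)
  have s2: "s\<^sup>2 = \<sigma>\<^sup>2 / real n" using n by (simp add: s_def power_divide)
  have rv[measurable]: "(\<lambda>\<omega>. Z \<omega> i) \<in> borel_measurable M" if "i \<in> {..<n}" for i
    using ind that unfolding indep_vars_def by auto
  have eqv: "vinner n (Z \<omega>) (Z \<omega>) = (\<Sum>i\<in>{..<n}. (Z \<omega> i)\<^sup>2)" for \<omega> by (simp add: vinner_def power2_eq_square)
  have D': "\<And>i. i \<in> {..<n} \<Longrightarrow> distributed M lborel (\<lambda>\<omega>. Z \<omega> i) (normal_density 0 s)" using D by (simp add: s_def)
  define b where "b = - real n / \<sigma>\<^sup>2"
  have d1: "1 - 2 * b * s\<^sup>2 = 3" using n sig by (simp add: b_def s2)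
  have ev1: "{\<omega> \<in> space M. b * (\<sigma>\<^sup>2 / 4) \<le> b * (\<Sum>i\<in>{..<n}. (Z \<omega> i)\<^sup>2)} \<in> events" by measurable
  have "prob {\<omega> \<in> space M. vinner n (Z \<omega>) (Z \<omega>) < \<sigma>\<^sup>2 / 4} \<le> prob {\<omega> \<in> space M. b * (\<sigma>\<^sup>2 / 4) \<le> b * (\<Sum>i\<in>{..<n}. (Z \<omega> i)\<^sup>2)}"
  proof (rule finite_measure_mono[OF _ ev1])
    have "b < 0" using n sig by (simp add: b_def)
    then show "{\<omega> \<in> space M. vinner n (Z \<omega>) (Z \<omega>) < \<sigma>\<^sup>2 / 4} \<subseteq> {\<omega> \<in> space M. b * (\<sigma>\<^sup>2 / 4) \<le> b * (\<Sum>i\<in>{..<n}. (Z \<omega> i)\<^sup>2)}"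
      unfolding eqv by (auto simp: mult_le_cancel_left_neg)
  qed
  also have "\<dots> \<le> exp (- b * (\<sigma>\<^sup>2 / 4)) * (1 / sqrt (1 - 2 * b * s\<^sup>2)) ^ card {..<n}"
    by (rule chernoff_sq[OF _ ind D' sp]) (use d1 in auto)
  also have "\<dots> = exp (real n / 4) * (1 / sqrt 3) ^ n" using d1 sig by (simp add: b_def)
  finally show "prob {\<omega> \<in> space M. vinner n (Z \<omega>) (Z \<omega>) < \<sigma>\<^sup>2 / 4} \<le> exp (real n / 4) * (1 / sqrt 3) ^ n" .
  define c where "c = real n / (4 * \<sigma>\<^sup>2)"
  have d2: "1 - 2 * c * s\<^sup>2 = 1 / 2" using n sig by (simp add: c_def s2)
  have ev2: "{\<omega> \<in> space M. c * (4 * \<sigma>\<^sup>2) \<le> c * (\<Sum>i\<in>{..<n}. (Z \<omega> i)\<^sup>2)} \<in> events" by measurable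
  have "prob {\<omega> \<in> space M. 4 * \<sigma>\<^sup>2 < vinner n (Z \<omega>) (Z \<omega>)} \<le> prob {\<omega> \<in> space M. c * (4 * \<sigma>\<^sup>2) \<le> c * (\<Sum>i\<in>{..<n}. (Z \<omega> i)\<^sup>2)}"
  proof (rule finite_measure_mono[OF _ ev2])
    have "c > 0" using n sig by (simp add: c_def)
    then show "{\<omega> \<in> space M. 4 * \<sigma>\<^sup>2 < vinner n (Z \<omega>) (Z \<omega>)} \<subseteq> {\<omega> \<in> space M. c * (4 * \<sigma>\<^sup>2) \<le> c * (\<Sum>i\<in>{..<n}. (Z \<omega> i)\<^sup>2)}"
      unfolding eqv by auto
  qed
  also have "\<dots> \<le> exp (- c * (4 * \<sigma>\<^sup>2)) * (1 / sqrt (1 - 2 * c * s\<^sup>2)) ^ card {..<n}"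
    by (rule chernoff_sq[OF _ ind D' sp]) (use d2 in auto)
  also have "\<dots> = exp (- real n) * (1 / sqrt (1 / 2)) ^ n"
  proof -
    have "c * (4 * \<sigma>\<^sup>2) = real n" using sig by (simp add: c_def)
    then show ?thesis by (simp only: d2 card_lessThan) simp
  qed
  finally show "prob {\<omega> \<in> space M. 4 * \<sigma>\<^sup>2 < vinner n (Z \<omega>) (Z \<omega>)} \<le> exp (- real n) * (1 / sqrt (1 / 2)) ^ n" .
qed

end

lemma pow_to0: "a < 0 \<Longrightarrow> (\<lambda>n. c * real n powr a) \<longlonglongrightarrow> 0"
  using tendsto_mult_right_zero[OF tendsto_neg_powr[OF _ filterlim_real_sequentially], of a c] by simp

lemma ev_small: "a < 0 \<Longrightarrow> \<epsilon> > 0 \<Longrightarrow> eventually (\<lambda>n. c * real n powr a < \<epsilon>) sequentially"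
  using order_tendstoD(2)[OF pow_to0] by blast

lemma geo1: "(\<lambda>n. exp (real n / 4) * (1 / sqrt 3) ^ n) \<longlonglongrightarrow> 0"
proof -
  have e: "exp (real n / 4) * (1 / sqrt 3) ^ n = (exp (1/4) / sqrt 3) ^ n" for n
    by (simp add: power_divide exp_of_nat_mult[symmetric] field_simps)
  have "exp (1/4::real) < sqrt 3"
  proof -
    have "(exp (1/4::real))\<^sup>2 = exp (1/2)" by (simp add: power2_eq_square exp_add[symmetric])
    also have "exp (1/2::real) \<le> exp 1" by simp
    also have "exp (1::real) < 3" using e_less_272 by simp
    finally have "(exp (1/4::real))\<^sup>2 < 3" .
    then show ?thesis by (metis real_less_rsqrt)
  qed
  then have "\<bar>exp (1/4::real) / sqrt 3\<bar> < 1" by simp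
  then show ?thesis unfolding e by (intro LIMSEQ_power_zero) simp
qed

lemma geo2: "(\<lambda>n. exp (- real n) * (1 / sqrt (1 / 2)) ^ n) \<longlonglongrightarrow> 0"
proof -
  have e: "exp (- real n) * (1 / sqrt (1/2)) ^ n = (sqrt 2 / exp 1) ^ n" for n
    by (simp add: power_divide exp_of_nat_mult[symmetric] field_simps exp_minus real_sqrt_divide)
  have "sqrt 2 < exp (1::real)"
  proof -
    have "sqrt 2 < sqrt ((3/2::real)\<^sup>2)" by (rule real_sqrt_less_mono) (simp add: power2_eq_square)
    also have "\<dots> = 3/2" by simp
    also have "3/2 < (2::real)" by simp
    also have "2 \<le> exp (1::real)" using exp_ge_add_one_self[of 1] by simp
    finally show ?thesis .
  qed
  then have "\<bar>sqrt 2 / exp 1\<bar> < (1::real)" by simp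
  then show ?thesis unfolding e by (intro LIMSEQ_power_zero) simp
qed



lemma ev_le_pow:
  assumes "a < b" "c > 0"
  shows "eventually (\<lambda>n. K * real n powr a \<le> c * real n powr b) sequentially"
proof -
  have "eventually (\<lambda>n. (K / c) * real n powr (a - b) < 1) sequentially"
    using ev_small[of "a - b" 1 "K / c"] assms by simp
  moreover have "eventually (\<lambda>n. n \<ge> 1) sequentially" by (rule eventually_ge_at_top)
  ultimately show ?thesis
  proof eventually_elim
    case (elim n)
    then have np: "real n > 0" by simp
    have "K * real n powr a = ((K / c) * real n powr (a - b)) * (c * real n powr b)"
      using assms np by (simp add: powr_diff field_simps)
    also have "\<dots> \<le> 1 * (c * real n powr b)"
      using elim assms np by (intro mult_right_mono) auto
    finally show ?case by simp
  qed
qed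

lemma exp_neg_le: "(x::real) > 0 \<Longrightarrow> exp (- x) \<le> 1 / x"
proof -
  assume x: "x > 0"
  have "x \<le> exp x" using exp_ge_add_one_self[of x] by linarith
  then have "exp (- x) * x \<le> exp (- x) * exp x" by (intro mult_left_mono) auto
  then have "exp (- x) * x \<le> 1" by (simp add: exp_minus)
  then show ?thesis using x by (simp add: field_simps)
qed

lemma union_lim:
  fixes p :: "nat \<Rightarrow> nat"
  assumes th: "0 \<le> \<theta>" "\<theta> < \<tau>" and sig: "\<sigma> > 0" and C: "C > 0" and xi: "\<xi> \<le> 1"
    and lnp: "eventually (\<lambda>n. ln (real (p n)) \<le> K2 * real n powr \<theta>) sequentially"
  shows "(\<lambda>n. (2 + C * real n powr \<xi>) * real (p n) * (2 * exp (- (real n powr \<tau>) / (2 * \<sigma>\<^sup>2)))) \<longlonglongrightarrow> 0"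
proof (rule tendsto_sandwich[of "\<lambda>n. 0"])
  have tp: "\<tau> > 0" using th by linarith
  show "eventually (\<lambda>n. 0 \<le> (2 + C * real n powr \<xi>) * real (p n) * (2 * exp (- (real n powr \<tau>) / (2 * \<sigma>\<^sup>2)))) sequentially"
    using C by (intro always_eventually allI mult_nonneg_nonneg) auto
  show "(\<lambda>n. 0) \<longlonglongrightarrow> (0::real)" by simp
  show "(\<lambda>n. (8 * (2 + C) * \<sigma>\<^sup>2) * real n powr (- \<tau>)) \<longlonglongrightarrow> 0"
    using tp by (intro pow_to0) simp
  have e1: "eventually (\<lambda>n. (2 / \<tau>) * real n powr (\<tau> / 2) \<le> (1 / (8 * \<sigma>\<^sup>2)) * real n powr \<tau>) sequentially"
    using tp sig by (intro ev_le_pow) auto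
  have e2: "eventually (\<lambda>n. K2 * real n powr \<theta> \<le> (1 / (8 * \<sigma>\<^sup>2)) * real n powr \<tau>) sequentially"
    using th sig by (intro ev_le_pow) auto
  show "eventually (\<lambda>n. (2 + C * real n powr \<xi>) * real (p n) * (2 * exp (- (real n powr \<tau>) / (2 * \<sigma>\<^sup>2)))
        \<le> (8 * (2 + C) * \<sigma>\<^sup>2) * real n powr (- \<tau>)) sequentially"
    using e1 e2 lnp eventually_ge_at_top[of 1]
  proof eventually_elim
    case (elim n)
    have np: "real n \<ge> 1" using elim by simp
    let ?x = "real n powr \<tau>"
    have xp: "?x > 0" using np by simp
    have A: "2 + C * real n powr \<xi> \<le> (2 + C) * real n"
    proof -
      have "real n powr \<xi> \<le> real n powr 1" using np xi by (intro powr_mono) auto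
      then have "C * real n powr \<xi> \<le> C * real n" using C np by simp
      then show ?thesis using np by (simp add: algebra_simps)
    qed
    have lnn: "ln (real n) \<le> (2 / \<tau>) * real n powr (\<tau> / 2)"
    proof -
      have "ln (real n) \<le> real n powr (\<tau> / 2) / (\<tau> / 2)" using ln_powr_bound[of "real n" "\<tau> / 2"] np tp by simp
      also have "real n powr (\<tau> / 2) / (\<tau> / 2) = (2 / \<tau>) * real n powr (\<tau> / 2)" by simp
      finally show ?thesis .
    qed
    have "(2 + C * real n powr \<xi>) * real (p n) * (2 * exp (- ?x / (2 * \<sigma>\<^sup>2))) \<le>
          ((2 + C) * real n) * exp (K2 * real n powr \<theta>) * (2 * exp (- ?x / (2 * \<sigma>\<^sup>2)))"
    proof (cases "p n = 0")
      case True then show ?thesis using C np by simp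
    next
      case False
      then have "real (p n) = exp (ln (real (p n)))" by simp
      also have "\<dots> \<le> exp (K2 * real n powr \<theta>)" using elim by simp
      finally have "real (p n) \<le> exp (K2 * real n powr \<theta>)" .
      then show ?thesis using A C by (intro mult_right_mono mult_mono) auto
    qed
    also have "((2 + C) * real n) * exp (K2 * real n powr \<theta>) * (2 * exp (- ?x / (2 * \<sigma>\<^sup>2))) =
        2 * (2 + C) * exp (ln (real n) + K2 * real n powr \<theta> - ?x / (2 * \<sigma>\<^sup>2))"
      using np by (simp add: exp_add exp_diff exp_minus field_simps)
    also have "\<dots> \<le> 2 * (2 + C) * exp (- (?x / (4 * \<sigma>\<^sup>2)))"
    proof -
      have "ln (real n) + K2 * real n powr \<theta> - ?x / (2 * \<sigma>\<^sup>2) \<le> - (?x / (4 * \<sigma>\<^sup>2))"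
      proof -
        have a: "ln (real n) \<le> 1 / (8 * \<sigma>\<^sup>2) * ?x" using lnn elim(1) by linarith
        have b: "K2 * real n powr \<theta> \<le> 1 / (8 * \<sigma>\<^sup>2) * ?x" using elim(2) .
        have c: "?x / (2 * \<sigma>\<^sup>2) = 4 * (1 / (8 * \<sigma>\<^sup>2) * ?x)" "?x / (4 * \<sigma>\<^sup>2) = 2 * (1 / (8 * \<sigma>\<^sup>2) * ?x)"
          using sig by (simp_all add: field_simps)
        show ?thesis unfolding c using a b by linarith
      qed
      then show ?thesis using C by simp
    qed
    also have "\<dots> \<le> 2 * (2 + C) * (1 / (?x / (4 * \<sigma>\<^sup>2)))"
      using C xp sig by (intro mult_left_mono exp_neg_le) auto
    also have "\<dots> = (8 * (2 + C) * \<sigma>\<^sup>2) * real n powr (- \<tau>)"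
      using xp by (simp add: powr_minus field_simps)
    finally show ?case .
  qed
qed

locale asy =
  fixes K1 Mb C1 C2 \<alpha> \<sigma> \<kappa> \<delta> \<gamma> \<mu> \<tau> \<xi> C :: real and bm :: "nat \<Rightarrow> real"
  assumes K1: "K1 > 0" and Mbp: "Mb > 0" and C1: "C1 > 0" and C2: "C2 > 0" and ap: "\<alpha> > 0"
    and sp: "\<sigma> > 0" and Cp: "C > 0" and d0: "\<delta> \<ge> 0" and m0: "\<mu> \<ge> 0" and xi0: "\<xi> \<ge> 0"
    and e1: "\<mu> + \<delta> - \<gamma> + max (\<kappa> / 2) 0 < 0"
    and e2: "\<mu> + (\<tau> - 1) / 2 + max (\<kappa> / 2) 0 < 0"
    and e3: "\<mu> + (\<tau> - 1) / 2 + \<delta> < 0"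
    and e4: "\<xi> + \<tau> - 1 < 0"
    and L: "filterlim (\<lambda>n. real n powr \<mu> * bm n) at_top sequentially"
begin

abbreviation "nuF n \<equiv> K1 * real n powr \<delta> * Mb * (C1 * real n powr (-\<gamma>) + C2 * real n powr (-\<gamma>))"
abbreviation "etaF n \<equiv> real n powr ((\<tau> - 1) / 2)"
abbreviation "UbF n \<equiv> (nuF n + etaF n) / \<alpha> + (nuF n + etaF n) * sqrt (128 / (\<alpha> * min (1 / real n powr \<kappa>) 1))
   + etaF n * sqrt (16 * (2 * (K1 * real n powr \<delta> * Mb)\<^sup>2 + 8 * \<sigma>\<^sup>2) / (\<alpha> * \<sigma>\<^sup>2))"
abbreviation "D1 \<equiv> max (\<kappa> / 2) 0"

lemma nu_eq: "n \<ge> 1 \<Longrightarrow> nuF n = K1 * Mb * (C1 + C2) * real n powr (\<delta> - \<gamma>)"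
  by (simp add: powr_diff powr_minus field_simps)

lemma nu_nn: "nuF n \<ge> 0"
  using K1 Mbp C1 C2 by (intro mult_nonneg_nonneg add_nonneg_nonneg) auto

lemma eta_sq: "(etaF n)\<^sup>2 = real n powr (\<tau> - 1)"
  by (simp add: power2_eq_square powr_add[symmetric])

lemma sq1: assumes "n \<ge> 1"
  shows "sqrt (128 / (\<alpha> * min (1 / real n powr \<kappa>) 1)) = sqrt (128 / \<alpha>) * real n powr D1"
proof (cases "\<kappa> \<ge> 0")
  case True
  have k1: "real n powr \<kappa> \<ge> 1" using assms True by (simp add: ge_one_powr_ge_zero)
  have "1 / real n powr \<kappa> \<le> 1" using k1 by (auto simp: divide_le_eq_1)
  then have m: "min (1 / real n powr \<kappa>) 1 = 1 / real n powr \<kappa>" by (rule min_absorb1)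
  have "sqrt (real n powr \<kappa>) = real n powr (\<kappa> / 2)" using assms by (simp add: powr_half_sqrt[symmetric] powr_powr)
  moreover have "128 / (\<alpha> * (1 / real n powr \<kappa>)) = (128 / \<alpha>) * real n powr \<kappa>" by simp
  moreover have "max (\<kappa> / 2) 0 = \<kappa> / 2" using True by simp
  ultimately show ?thesis unfolding m by (simp only: real_sqrt_mult)
next
  case False
  have "real n powr \<kappa> \<le> real n powr 0" using assms False by (intro powr_mono) auto
  then have "real n powr \<kappa> \<le> 1" using assms by simp
  then have m: "min (1 / real n powr \<kappa>) 1 = 1" using assms by (simp add: min_def)
  show ?thesis using False assms unfolding m by (simp add: max_def)
qed

lemma sq2: assumes "n \<ge> 1"
  shows "sqrt (16 * (2 * (K1 * real n powr \<delta> * Mb)\<^sup>2 + 8 * \<sigma>\<^sup>2) / (\<alpha> * \<sigma>\<^sup>2)) \<le>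
    (sqrt (16 / (\<alpha> * \<sigma>\<^sup>2)) * (sqrt 2 * K1 * Mb + sqrt 8 * \<sigma>)) * real n powr \<delta>"
proof -
  have nd: "real n powr \<delta> \<ge> 1" using assms d0 by (simp add: ge_one_powr_ge_zero)
  have "sqrt (16 * (2 * (K1 * real n powr \<delta> * Mb)\<^sup>2 + 8 * \<sigma>\<^sup>2) / (\<alpha> * \<sigma>\<^sup>2)) =
      sqrt (16 / (\<alpha> * \<sigma>\<^sup>2)) * sqrt (2 * (K1 * real n powr \<delta> * Mb)\<^sup>2 + 8 * \<sigma>\<^sup>2)"
    by (simp add: real_sqrt_mult[symmetric])
  also have "sqrt (2 * (K1 * real n powr \<delta> * Mb)\<^sup>2 + 8 * \<sigma>\<^sup>2) \<le> sqrt (2 * (K1 * real n powr \<delta> * Mb)\<^sup>2) + sqrt (8 * \<sigma>\<^sup>2)"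
    by (rule sqrt_add_le_add_sqrt) auto
  also have "sqrt (2 * (K1 * real n powr \<delta> * Mb)\<^sup>2) = sqrt 2 * K1 * Mb * real n powr \<delta>"
    using K1 Mbp by (simp add: real_sqrt_mult)
  also have "sqrt (8 * \<sigma>\<^sup>2) = sqrt 8 * \<sigma>" using sp by (simp add: real_sqrt_mult)
  also have "sqrt 8 * \<sigma> \<le> sqrt 8 * \<sigma> * real n powr \<delta>" using nd sp by simp
  finally show ?thesis using sp ap by (simp add: mult_left_mono algebra_simps)
qed

lemma Ub_nn: "UbF n \<ge> 0"
  using nu_nn ap sp K1 Mbp C1 C2 by (intro add_nonneg_nonneg mult_nonneg_nonneg divide_nonneg_nonneg) auto

abbreviation "c1 \<equiv> 1 / \<alpha> + sqrt (128 / \<alpha>)"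
abbreviation "c2' \<equiv> sqrt (16 / (\<alpha> * \<sigma>\<^sup>2)) * (sqrt 2 * K1 * Mb + sqrt 8 * \<sigma>)"
abbreviation "Bnd n \<equiv> c1 * (K1 * Mb * (C1 + C2) * real n powr (\<mu> + \<delta> - \<gamma> + D1) + real n powr (\<mu> + (\<tau> - 1) / 2 + D1))
   + c2' * real n powr (\<mu> + (\<tau> - 1) / 2 + \<delta>)"

lemma powr3: "(x::real) powr a * x powr b * x powr c = x powr (a + b + c)"
  by (simp add: powr_add)

lemma Ub_le: assumes n: "n \<ge> 1" shows "real n powr \<mu> * UbF n \<le> Bnd n"
proof -
  have np: "real n > 0" using n by simp
  have nD: "real n powr D1 \<ge> 1" using n by (simp add: ge_one_powr_ge_zero)
  have ne: "nuF n + etaF n \<ge> 0" using nu_nn by simp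
  have "(nuF n + etaF n) / \<alpha> \<le> (nuF n + etaF n) * real n powr D1 / \<alpha>"
    using ne nD ap by (intro divide_right_mono) (auto simp: mult_le_cancel_left1)
  moreover have "(nuF n + etaF n) * sqrt (128 / (\<alpha> * min (1 / real n powr \<kappa>) 1)) =
      (nuF n + etaF n) * real n powr D1 * sqrt (128 / \<alpha>)" using sq1[OF n] by simp
  moreover have "etaF n * sqrt (16 * (2 * (K1 * real n powr \<delta> * Mb)\<^sup>2 + 8 * \<sigma>\<^sup>2) / (\<alpha> * \<sigma>\<^sup>2)) \<le>
      etaF n * (c2' * real n powr \<delta>)"
    using sq2[OF n] by (intro mult_left_mono) auto
  ultimately have U: "UbF n \<le> c1 * ((nuF n + etaF n) * real n powr D1) + c2' * (etaF n * real n powr \<delta>)"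
    by (simp add: algebra_simps add_divide_distrib)
  have "real n powr \<mu> * UbF n \<le> real n powr \<mu> * (c1 * ((nuF n + etaF n) * real n powr D1) + c2' * (etaF n * real n powr \<delta>))"
    using U by (intro mult_left_mono) auto
  also have "\<dots> = Bnd n"
  proof -
    have p1: "real n powr \<mu> * real n powr (\<delta> - \<gamma>) * real n powr D1 = real n powr (\<mu> + \<delta> - \<gamma> + D1)"
    proof -
      have "\<mu> + (\<delta> - \<gamma>) + D1 = \<mu> + \<delta> - \<gamma> + D1" by linarith
      then show ?thesis by (subst powr3) (simp only:)
    qed
    have p2: "real n powr \<mu> * real n powr ((\<tau> - 1) / 2) * real n powr D1 = real n powr (\<mu> + (\<tau> - 1) / 2 + D1)"
      by (simp add: powr3)
    have p3: "real n powr \<mu> * real n powr ((\<tau> - 1) / 2) * real n powr \<delta> = real n powr (\<mu> + (\<tau> - 1) / 2 + \<delta>)"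
      by (simp add: powr3)
    have "real n powr \<mu> * (c1 * ((nuF n + etaF n) * real n powr D1) + c2' * (etaF n * real n powr \<delta>)) =
      c1 * (K1 * Mb * (C1 + C2) * (real n powr \<mu> * real n powr (\<delta> - \<gamma>) * real n powr D1)
        + real n powr \<mu> * real n powr ((\<tau> - 1) / 2) * real n powr D1)
      + c2' * (real n powr \<mu> * real n powr ((\<tau> - 1) / 2) * real n powr \<delta>)"
      unfolding nu_eq[OF n] by (simp only: ring_distribs mult_ac)
    then show ?thesis unfolding p1 p2 p3 .
  qed
  finally show ?thesis .
qed

lemma Ub_lim: "(\<lambda>n. real n powr \<mu> * UbF n) \<longlonglongrightarrow> 0"
proof (rule tendsto_sandwich[of "\<lambda>n. 0" _ _ Bnd])
  show "eventually (\<lambda>n. 0 \<le> real n powr \<mu> * UbF n) sequentially"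
    using Ub_nn by (intro always_eventually allI mult_nonneg_nonneg) auto
  show "eventually (\<lambda>n. real n powr \<mu> * UbF n \<le> Bnd n) sequentially"
    using eventually_ge_at_top[of 1] by eventually_elim (rule Ub_le)
  have a: "\<mu> + \<delta> - \<gamma> + D1 < 0" "\<mu> + (\<tau> - 1) / 2 + D1 < 0" "\<mu> + (\<tau> - 1) / 2 + \<delta> < 0"
    using e1 e2 e3 by auto
  have "Bnd \<longlonglongrightarrow> c1 * (0 + 0) + 0"
    by (intro tendsto_add tendsto_mult_right_zero tendsto_mult tendsto_const pow_to0[OF a(1)]
        pow_to0[OF a(2), of 1, simplified] pow_to0[OF a(3)])
  then show "Bnd \<longlonglongrightarrow> 0" by simp
qed simp

lemma nueta_lim: "(\<lambda>n. real n powr \<mu> * (nuF n + etaF n)) \<longlonglongrightarrow> 0"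
proof -
  have a: "\<mu> + \<delta> - \<gamma> < 0" "\<mu> + (\<tau> - 1) / 2 < 0" using e1 e2 by auto
  have lim0: "(\<lambda>n. K1 * Mb * (C1 + C2) * real n powr (\<mu> + \<delta> - \<gamma>) + 1 * real n powr (\<mu> + (\<tau> - 1) / 2)) \<longlonglongrightarrow> 0 + 0"
    by (intro tendsto_add pow_to0 a)
  then have lim: "(\<lambda>n. K1 * Mb * (C1 + C2) * real n powr (\<mu> + \<delta> - \<gamma>) + real n powr (\<mu> + (\<tau> - 1) / 2)) \<longlonglongrightarrow> 0"
    by simp
  have ev: "eventually (\<lambda>n. K1 * Mb * (C1 + C2) * real n powr (\<mu> + \<delta> - \<gamma>) + real n powr (\<mu> + (\<tau> - 1) / 2) =
      real n powr \<mu> * (nuF n + etaF n)) sequentially"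
    using eventually_ge_at_top[of 1]
  proof eventually_elim
    case (elim n) then have np: "real n > 0" by simp
    have p1: "real n powr \<mu> * real n powr (\<delta> - \<gamma>) = real n powr (\<mu> + \<delta> - \<gamma>)"
      by (simp add: powr_add[symmetric] algebra_simps)
    have p2: "real n powr \<mu> * real n powr ((\<tau> - 1) / 2) = real n powr (\<mu> + (\<tau> - 1) / 2)"
      by (simp add: powr_add[symmetric])
    have "real n powr \<mu> * (nuF n + etaF n) = K1 * Mb * (C1 + C2) * (real n powr \<mu> * real n powr (\<delta> - \<gamma>))
       + real n powr \<mu> * real n powr ((\<tau> - 1) / 2)"
      unfolding nu_eq[OF elim] by (simp only: ring_distribs mult_ac)
    then show ?case unfolding p1 p2 by simp
  qed
  show ?thesis using Lim_transform_eventually[OF lim ev] .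
qed

lemma R_lim: "filterlim (\<lambda>n. real n powr \<mu> * (\<alpha> * bm n - nuF n - etaF n)) at_top sequentially"
proof -
  have "filterlim (\<lambda>n. \<alpha> * (real n powr \<mu> * bm n)) at_top sequentially"
    by (rule filterlim_tendsto_pos_mult_at_top[OF tendsto_const ap L])
  then have "filterlim (\<lambda>n. - (real n powr \<mu> * (nuF n + etaF n)) + \<alpha> * (real n powr \<mu> * bm n)) at_top sequentially"
    using nueta_lim by (intro filterlim_tendsto_add_at_top[where c=0]) (auto intro: tendsto_minus_cancel_left[THEN iffD1])
  then show ?thesis by (simp add: algebra_simps)
qed

lemma small_ev: "eventually (\<lambda>n. C * real n powr \<xi> * (etaF n)\<^sup>2 \<le> \<sigma>\<^sup>2 / 8 \<and> 2 * (etaF n)\<^sup>2 \<le> \<sigma>\<^sup>2 / 16) sequentially"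
proof -
  have a: "\<xi> + (\<tau> - 1) < 0" "\<tau> - 1 < 0" using e4 xi0 by auto
  have s: "\<sigma>\<^sup>2 / 8 > 0" "\<sigma>\<^sup>2 / 16 > 0" using sp by auto
  have 1: "eventually (\<lambda>n. C * real n powr (\<xi> + (\<tau> - 1)) < \<sigma>\<^sup>2 / 8) sequentially" by (rule ev_small[OF a(1) s(1)])
  have 2: "eventually (\<lambda>n. 2 * real n powr (\<tau> - 1) < \<sigma>\<^sup>2 / 16) sequentially" by (rule ev_small[OF a(2) s(2)])
  show ?thesis using 1 2 eventually_ge_at_top[of 1]
  proof eventually_elim
    case (elim n) then have np: "real n > 0" by simp
    have "C * real n powr \<xi> * (etaF n)\<^sup>2 = C * real n powr (\<xi> + (\<tau> - 1))"
      unfolding eta_sq by (simp add: powr_add mult.assoc)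
    then show ?case using elim unfolding eta_sq by linarith
  qed
qed

end

lemma aux_div:
  fixes x m b a :: real
  assumes "x \<le> x * (m * b)" "b > 0" "a > 0"
  shows "x / (a * b) \<le> m * x / a"
proof -
  have "x / (a * b) \<le> x * (m * b) / (a * b)" using assms by (intro divide_right_mono) auto
  also have "\<dots> = m * x / a" using assms by (simp add: field_simps)
  finally show ?thesis .
qed

context prob_space begin

lemma bad1_ev:
  assumes ind: "indep_vars (\<lambda>_. borel) (\<lambda>i \<omega>. Z \<omega> i) {..<n}" and U: "finite U"
  shows "{\<omega> \<in> space M. \<exists>u\<in>U. \<eta> * sqrt (vinner n u u) < \<bar>vinner n u (Z \<omega>)\<bar>} \<in> events"
proof -
  have rv[measurable]: "(\<lambda>\<omega>. Z \<omega> i) \<in> borel_measurable M" if "i \<in> {..<n}" for i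
    using ind that unfolding indep_vars_def by auto
  have ev: "{\<omega> \<in> space M. \<eta> * sqrt (vinner n u u) < \<bar>vinner n u (Z \<omega>)\<bar>} \<in> events" for u
    unfolding vinner_def by measurable
  have "{\<omega> \<in> space M. \<exists>u\<in>U. \<eta> * sqrt (vinner n u u) < \<bar>vinner n u (Z \<omega>)\<bar>} =
     (\<Union>u\<in>U. {\<omega> \<in> space M. \<eta> * sqrt (vinner n u u) < \<bar>vinner n u (Z \<omega>)\<bar>})" by auto
  then show ?thesis using ev U by auto
qed

lemma bad23_ev:
  assumes ind: "indep_vars (\<lambda>_. borel) (\<lambda>i \<omega>. Z \<omega> i) {..<n}"
  shows "{\<omega> \<in> space M. vinner n (Z \<omega>) (Z \<omega>) < a} \<in> events" "{\<omega> \<in> space M. a < vinner n (Z \<omega>) (Z \<omega>)} \<in> events"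
proof -
  have rv[measurable]: "(\<lambda>\<omega>. Z \<omega> i) \<in> borel_measurable M" if "i \<in> {..<n}" for i
    using ind that unfolding indep_vars_def by auto
  show "{\<omega> \<in> space M. vinner n (Z \<omega>) (Z \<omega>) < a} \<in> events" unfolding vinner_def by measurable
  show "{\<omega> \<in> space M. a < vinner n (Z \<omega>) (Z \<omega>)} \<in> events" unfolding vinner_def by measurable
qed

end

theorem theorem1:
  fixes X :: "nat \<Rightarrow> nat \<Rightarrow> nat \<Rightarrow> real" and p :: "nat \<Rightarrow> nat"
    and \<beta> :: "nat \<Rightarrow> nat \<Rightarrow> real" and \<sigma> :: real
    and M :: "nat \<Rightarrow> 'w measure" and \<epsilon> :: "nat \<Rightarrow> 'w \<Rightarrow> nat \<Rightarrow> real"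
    and \<delta> \<gamma> \<theta> \<xi> \<mu> \<kappa> C1 C Mb \<alpha> C2 :: real
  assumes unit_cols: "\<forall>n j. j < p n \<longrightarrow> vinner n (col (X n) j) (col (X n) j) = 1"
    and sigma_pos: "\<sigma> > 0"
    and prob: "\<forall>n. prob_space (M n)"
    and indep: "\<forall>n. prob_space.indep_vars (M n) (\<lambda>_. borel) (\<lambda>i \<omega>. \<epsilon> n \<omega> i) {..<n}"
    and gauss: "\<forall>n i. i < n \<longrightarrow>
        distributed (M n) lborel (\<lambda>\<omega>. \<epsilon> n \<omega> i) (normal_density 0 (\<sigma> / sqrt (real n)))"
    \<comment> \<open>(A1)\<close>
    and A1: "0 \<le> \<delta>" "\<delta> < 1/2"
      "(\<lambda>n. real (card (supp (p n) (\<beta> n)))) \<in> O(\<lambda>n. real n powr \<delta>)"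
    \<comment> \<open>(A2)\<close>
    and A2: "\<delta> < \<gamma>" "\<gamma> < 1/2" "0 \<le> \<theta>" "\<theta> < 1 - 2 * \<gamma>"
      "(\<lambda>n. ln (real (p n))) \<in> O(\<lambda>n. real n powr \<theta>)"
    \<comment> \<open>(A3), with pi_n = C1 * n powr (-gamma)\<close>
    and A3: "C1 > 0" "C > 0" "0 \<le> \<xi>" "\<xi> < 2 * (\<gamma> - \<delta>)"
      "\<forall>n j. j < p n \<longrightarrow>
         real (card (Cset n (p n) (X n) (C1 * real n powr (-\<gamma>)) j)) \<le> C * real n powr \<xi>"
    \<comment> \<open>(A4)\<close>
    and A4: "Mb > 0" "\<forall>n. \<forall>j\<in>supp (p n) (\<beta> n). \<bar>\<beta> n j\<bar> < Mb"
      "0 \<le> \<mu>" "\<mu> < \<gamma> - \<delta> - \<xi> / 2"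
      "eventually (\<lambda>n. supp (p n) (\<beta> n) \<noteq> {}) sequentially"
      "filterlim (\<lambda>n. real n powr \<mu> * Min ((\<lambda>j. \<bar>\<beta> n j\<bar>) ` supp (p n) (\<beta> n)))
         at_top sequentially"
    \<comment> \<open>(A5)\<close>
    and A5: "0 < \<alpha>" "\<alpha> < 1"
      "\<forall>n j. j < p n \<longrightarrow> 1 - a_coef n (p n) (X n) (C1 * real n powr (-\<gamma>)) j > \<alpha>"
    \<comment> \<open>(A6), divergence uniform over the admissible j\<close>
    and A6: "0 \<le> \<kappa> / 2 + \<mu>" "\<kappa> / 2 + \<mu> < \<gamma> - \<delta> - \<xi> / 2"
      "\<forall>B. eventually (\<lambda>n. \<forall>j < p n.
          \<not> supp (p n) (\<beta> n) \<subseteq> Cset n (p n) (X n) (C1 * real n powr (-\<gamma>)) j \<longrightarrow>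
          B < real n powr \<kappa> *
            (vinner n (\<lambda>i. signal n (p n) (X n) (\<beta> n) i
                  - proj n (X n) (Cset n (p n) (X n) (C1 * real n powr (-\<gamma>)) j)
                      (signal n (p n) (X n) (\<beta> n)) i)
                (\<lambda>i. signal n (p n) (X n) (\<beta> n) i
                  - proj n (X n) (Cset n (p n) (X n) (C1 * real n powr (-\<gamma>)) j)
                      (signal n (p n) (X n) (\<beta> n)) i)
             / vinner n (signal n (p n) (X n) (\<beta> n)) (signal n (p n) (X n) (\<beta> n))))
        sequentially"
    \<comment> \<open>additional condition\<close>
    and extra: "C2 > 0"
      "\<forall>n j k. j < p n \<longrightarrow>
          k \<in> supp (p n) (\<beta> n) - Cset n (p n) (X n) (C1 * real n powr (-\<gamma>)) j \<longrightarrow> k \<noteq> j \<longrightarrow>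
          \<bar>vinner n (PiX n (p n) (X n) (C1 * real n powr (-\<gamma>)) j) (col (X n) k)\<bar>
            \<le> C2 * real n powr (-\<gamma>)"
  shows "\<forall>s :: rescale. \<exists>E r R.
     (\<forall>n. E n \<in> sets (M n)) \<and>
     (\<lambda>n. measure (M n) (E n)) \<longlonglongrightarrow> 1 \<and>
     r \<longlonglongrightarrow> 0 \<and> filterlim R at_top sequentially \<and>
     (\<forall>n. \<forall>\<omega>\<in>E n.
        let T = tilted s n (p n) (X n) (C1 * real n powr (-\<gamma>))
                  (resp n (p n) (X n) (\<beta> n) (\<epsilon> n \<omega>));
            S = supp (p n) (\<beta> n)
        in (\<forall>k < p n. k \<notin> S \<longrightarrow>
               \<bar>T k\<bar> / Min ((\<lambda>j. \<bar>T j\<bar>) ` S) \<le> r n \<and>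
               real n powr \<mu> * \<bar>T k\<bar> \<le> r n) \<and>
           (\<forall>j\<in>S. R n \<le> real n powr \<mu> * \<bar>T j\<bar>) \<and>
           (s = Lam \<longrightarrow> (\<forall>j\<in>S. \<bar>T j / \<beta> n j - 1\<bar> \<le> r n)))"
  apply (intro allI)
  subgoal for s
  proof -
  obtain K1 where K1: "K1 > 0"
    and K1ev: "eventually (\<lambda>n. norm (real (card (supp (p n) (\<beta> n)))) \<le> K1 * norm (real n powr \<delta>)) sequentially"
    using A1(3) by (elim landau_o.bigE) auto
  obtain K2 where K2: "K2 > 0"
    and K2ev: "eventually (\<lambda>n. norm (ln (real (p n))) \<le> K2 * norm (real n powr \<theta>)) sequentially"
    using A2(5) by (elim landau_o.bigE) auto
  define \<tau> where "\<tau> = (\<theta> + 1 - 2 * \<gamma>) / 2"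
  define bm where "bm n = Min ((\<lambda>j. \<bar>\<beta> n j\<bar>) ` supp (p n) (\<beta> n))" for n
  have taus: "\<theta> < \<tau>" "\<tau> < 1 - 2 * \<gamma>" using A2 by (auto simp: \<tau>_def)
  have ex: "\<mu> + \<delta> - \<gamma> + max (\<kappa> / 2) 0 < 0" "\<mu> + (\<tau> - 1) / 2 + max (\<kappa> / 2) 0 < 0"
     "\<mu> + (\<tau> - 1) / 2 + \<delta> < 0" "\<xi> + \<tau> - 1 < 0"
  proof -
    have t1: "(\<tau> - 1) / 2 < - \<gamma>" "\<tau> - 1 < - 2 * \<gamma>" using A2(4) unfolding \<tau>_def by (simp_all add: field_simps)
    have a: "\<mu> + \<delta> - \<gamma> < 0" using A4(4) A3(3) by linarith
    have mx: "max (\<kappa> / 2) 0 = (if 0 \<le> \<kappa> then \<kappa> / 2 else 0)" by auto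
    show "\<mu> + \<delta> - \<gamma> + max (\<kappa> / 2) 0 < 0"
    proof (cases "\<kappa> \<ge> 0")
      case True then show ?thesis using a A6(2) A3(3) unfolding mx by simp
    next
      case False then show ?thesis using a unfolding mx by simp
    qed
    show "\<mu> + (\<tau> - 1) / 2 + max (\<kappa> / 2) 0 < 0"
    proof (cases "\<kappa> \<ge> 0")
      case True
      have "\<mu> + (\<tau> - 1) / 2 + \<kappa> / 2 < 0" using t1 A6(2) A3(3) A1(1) by linarith
      then show ?thesis using True unfolding mx by simp
    next
      case False
      have "\<mu> + (\<tau> - 1) / 2 < 0" using t1 a A1(1) by linarith
      then show ?thesis using False unfolding mx by simp
    qed
    show "\<mu> + (\<tau> - 1) / 2 + \<delta> < 0" using a t1 by linarith
    have x2: "\<xi> < 2 * \<gamma> - 2 * \<delta>" using A3(4) by (simp add: algebra_simps)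
    show "\<xi> + \<tau> - 1 < 0" using t1(2) x2 A1(1) by linarith
  qed
  interpret asy K1 Mb C1 C2 \<alpha> \<sigma> \<kappa> \<delta> \<gamma> \<mu> \<tau> \<xi> C bm
  proof
    show "filterlim (\<lambda>n. real n powr \<mu> * bm n) at_top sequentially" using A4(6) by (simp add: bm_def)
  qed (use K1 A4(1,3) extra(1) A3(1,2,3) A5(1) sigma_pos A1(1) ex in auto)
  define U where "U n = (\<lambda>k. Xstar n (p n) (X n) (C1 * real n powr (-\<gamma>)) k) ` {..<p n}
      \<union> (\<Union>k\<in>{..<p n}. gsQ n (X n) (Cset n (p n) (X n) (C1 * real n powr (-\<gamma>)) k))
      \<union> (\<lambda>k. resid_sig n (p n) (X n) (C1 * real n powr (-\<gamma>)) (\<beta> n) k) ` {..<p n}" for n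
  define Good where "Good n \<omega> \<longleftrightarrow> (\<forall>u\<in>U n. \<bar>vinner n u (\<epsilon> n \<omega>)\<bar> \<le> etaF n * sqrt (vinner n u u)) \<and>
      \<sigma>\<^sup>2 / 4 \<le> vinner n (\<epsilon> n \<omega>) (\<epsilon> n \<omega>) \<and> vinner n (\<epsilon> n \<omega>) (\<epsilon> n \<omega>) \<le> 4 * \<sigma>\<^sup>2" for n \<omega>
  define P where "P n \<longleftrightarrow> 1 \<le> n \<and> supp (p n) (\<beta> n) \<noteq> {} \<and> real (card (supp (p n) (\<beta> n))) \<le> K1 * real n powr \<delta> \<and>
      (\<forall>j<p n. \<not> supp (p n) (\<beta> n) \<subseteq> Cset n (p n) (X n) (C1 * real n powr (-\<gamma>)) j \<longrightarrow>
          1 < real n powr \<kappa> * (vinner n (resid_sig n (p n) (X n) (C1 * real n powr (-\<gamma>)) (\<beta> n) j)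
                 (resid_sig n (p n) (X n) (C1 * real n powr (-\<gamma>)) (\<beta> n) j) /
               vinner n (signal n (p n) (X n) (\<beta> n)) (signal n (p n) (X n) (\<beta> n)))) \<and>
      C * real n powr \<xi> * (etaF n)\<^sup>2 \<le> \<sigma>\<^sup>2 / 8 \<and> 2 * (etaF n)\<^sup>2 \<le> \<sigma>\<^sup>2 / 16 \<and>
      1 \<le> real n powr \<mu> * (\<alpha> * bm n - nuF n - etaF n) \<and> 1 \<le> real n powr \<mu> * bm n \<and>
      ln (real (p n)) \<le> K2 * real n powr \<theta>" for n
  define E where "E n = {\<omega> \<in> space (M n). P n \<and> Good n \<omega>}" for n
  define r where "r n = real n powr \<mu> * UbF n + UbF n / (\<alpha> * bm n - nuF n - etaF n) + (nuF n + etaF n) / (\<alpha> * bm n)" for n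
  define R where "R n = real n powr \<mu> * (\<alpha> * bm n - nuF n - etaF n)" for n
  have claims: "let T = tilted s n (p n) (X n) (C1 * real n powr (-\<gamma>))
                  (resp n (p n) (X n) (\<beta> n) (\<epsilon> n \<omega>));
            S = supp (p n) (\<beta> n)
        in (\<forall>k < p n. k \<notin> S \<longrightarrow>
               \<bar>T k\<bar> / Min ((\<lambda>j. \<bar>T j\<bar>) ` S) \<le> r n \<and>
               real n powr \<mu> * \<bar>T k\<bar> \<le> r n) \<and>
           (\<forall>j\<in>S. R n \<le> real n powr \<mu> * \<bar>T j\<bar>) \<and>
           (s = Lam \<longrightarrow> (\<forall>j\<in>S. \<bar>T j / \<beta> n j - 1\<bar> \<le> r n))"
    if Pn: "P n" and Gn: "Good n \<omega>" for n \<omega>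
  proof -
    have n1: "real n \<ge> 1" using Pn by (simp add: P_def)
    have np: "real n > 0" using n1 by simp
    interpret F: fixn n "p n" "X n" "\<beta> n" "\<epsilon> n \<omega>" "C1 * real n powr (-\<gamma>)" "C2 * real n powr (-\<gamma>)"
      \<alpha> Mb "K1 * real n powr \<delta>" "C * real n powr \<xi>" "etaF n" \<sigma> "real n powr \<kappa>"
    proof
      show "\<And>j. j < p n \<Longrightarrow> vinner n (col (X n) j) (col (X n) j) = 1" using unit_cols by auto
      show "\<And>j. j < p n \<Longrightarrow> 1 - a_coef n (p n) (X n) (C1 * real n powr - \<gamma>) j > \<alpha>" using A5(3) by auto
      show "\<alpha> > 0" by (rule A5(1))
      show "\<And>j k. j < p n \<Longrightarrow> k \<in> supp (p n) (\<beta> n) - Cset n (p n) (X n) (C1 * real n powr - \<gamma>) j \<Longrightarrow>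
         k \<noteq> j \<Longrightarrow> \<bar>vinner n (PiX n (p n) (X n) (C1 * real n powr - \<gamma>) j) (col (X n) k)\<bar> \<le> C2 * real n powr - \<gamma>"
        using extra(2) by blast
      show "C1 * real n powr - \<gamma> \<ge> 0" "C2 * real n powr - \<gamma> \<ge> 0" using A3(1) extra(1) by auto
      show "supp (p n) (\<beta> n) \<noteq> {}" "real (card (supp (p n) (\<beta> n))) \<le> K1 * real n powr \<delta>"
        using Pn by (auto simp: P_def)
      show "\<And>j. j \<in> supp (p n) (\<beta> n) \<Longrightarrow> \<bar>\<beta> n j\<bar> < Mb" using A4(2) by auto
      show "\<And>j. j < p n \<Longrightarrow> real (card (Cset n (p n) (X n) (C1 * real n powr - \<gamma>) j)) \<le> C * real n powr \<xi>"
        using A3(5) by auto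
      show "real n powr \<kappa> > 0" using np by simp
      show "\<And>j. j < p n \<Longrightarrow> \<not> supp (p n) (\<beta> n) \<subseteq> Cset n (p n) (X n) (C1 * real n powr - \<gamma>) j \<Longrightarrow>
        1 < real n powr \<kappa> * (vinner n (resid_sig n (p n) (X n) (C1 * real n powr - \<gamma>) (\<beta> n) j) (resid_sig n (p n) (X n) (C1 * real n powr - \<gamma>) (\<beta> n) j) /
           vinner n (signal n (p n) (X n) (\<beta> n)) (signal n (p n) (X n) (\<beta> n)))"
        using Pn by (auto simp: P_def)
      show "\<And>k. k < p n \<Longrightarrow> \<bar>vinner n (Xstar n (p n) (X n) (C1 * real n powr - \<gamma>) k) (\<epsilon> n \<omega>)\<bar>
          \<le> etaF n * sqrt (vinner n (Xstar n (p n) (X n) (C1 * real n powr - \<gamma>) k) (Xstar n (p n) (X n) (C1 * real n powr - \<gamma>) k))"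
        using Gn by (auto simp: Good_def U_def)
      show "\<And>k q. k < p n \<Longrightarrow> q \<in> gsQ n (X n) (Cset n (p n) (X n) (C1 * real n powr - \<gamma>) k) \<Longrightarrow>
          \<bar>vinner n q (\<epsilon> n \<omega>)\<bar> \<le> etaF n * sqrt (vinner n q q)"
        using Gn by (auto simp: Good_def U_def)
      show "\<And>k. k < p n \<Longrightarrow> \<bar>vinner n (resid_sig n (p n) (X n) (C1 * real n powr - \<gamma>) (\<beta> n) k) (\<epsilon> n \<omega>)\<bar>
          \<le> etaF n * sqrt (vinner n (resid_sig n (p n) (X n) (C1 * real n powr - \<gamma>) (\<beta> n) k) (resid_sig n (p n) (X n) (C1 * real n powr - \<gamma>) (\<beta> n) k))"
        using Gn by (auto simp: Good_def U_def)
      show "\<sigma>\<^sup>2 / 4 \<le> vinner n (\<epsilon> n \<omega>) (\<epsilon> n \<omega>)" "vinner n (\<epsilon> n \<omega>) (\<epsilon> n \<omega>) \<le> 4 * \<sigma>\<^sup>2"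
        using Gn by (auto simp: Good_def)
      show "\<sigma> > 0" by (rule sigma_pos)
      show "etaF n \<ge> 0" by simp
      show "C * real n powr \<xi> * (etaF n)\<^sup>2 \<le> \<sigma>\<^sup>2 / 8" "2 * (etaF n)\<^sup>2 \<le> \<sigma>\<^sup>2 / 16"
        using Pn by (auto simp: P_def)
      have "1 \<le> real n powr \<mu> * (\<alpha> * bm n - nuF n - etaF n)" using Pn by (simp add: P_def)
      then have "\<alpha> * bm n - nuF n - etaF n > 0" using np by (smt (verit) mult_nonneg_nonpos powr_ge_zero)
      then show "\<alpha> * Min ((\<lambda>j. \<bar>\<beta> n j\<bar>) ` supp (p n) (\<beta> n)) - K1 * real n powr \<delta> * Mb * (C1 * real n powr - \<gamma> + C2 * real n powr - \<gamma>) - etaF n > 0"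
        by (simp add: bm_def)
    qed
    let ?T = "tilted s n (p n) (X n) (C1 * real n powr (-\<gamma>)) (resp n (p n) (X n) (\<beta> n) (\<epsilon> n \<omega>))"
    let ?S = "supp (p n) (\<beta> n)"
    let ?L = "\<alpha> * bm n - nuF n - etaF n"
    have Lp: "?L > 0"
    proof -
      have "1 \<le> real n powr \<mu> * ?L" using Pn by (simp add: P_def)
      then show ?thesis using np by (smt (verit) mult_nonneg_nonpos powr_ge_zero)
    qed
    have Ubk: "\<bar>?T k\<bar> \<le> UbF n" if "k < p n" "k \<notin> ?S" for k
      using F.T_upper[OF that, of s] .
    have Lj: "?L \<le> \<bar>?T j\<bar>" if "j \<in> ?S" for j
      using F.T_lower[OF that, of s] by (simp add: bm_def)
    have bmp: "bm n > 0" using F.bmin_pos by (simp add: bm_def)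
    have nep: "nuF n + etaF n \<ge> 0" using nu_nn by simp
    have t1: "real n powr \<mu> * UbF n \<ge> 0" using Ub_nn by simp
    have t2: "UbF n / ?L \<ge> 0" using Ub_nn Lp by simp
    have t3: "(nuF n + etaF n) / (\<alpha> * bm n) \<ge> 0" using nep bmp A5(1) by simp
    have r1: "real n powr \<mu> * UbF n \<le> r n" and r2: "UbF n / ?L \<le> r n" and r3: "(nuF n + etaF n) / (\<alpha> * bm n) \<le> r n"
      using t1 t2 t3 by (simp_all add: r_def)
    have finS: "finite ?S" by (simp add: supp_def)
    have Sne: "?S \<noteq> {}" using Pn by (simp add: P_def)
    have Minge: "?L \<le> Min ((\<lambda>j. \<bar>?T j\<bar>) ` ?S)"
      using finS Sne Lj by (intro Min.boundedI) auto
    show ?thesis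
      unfolding Let_def
    proof (intro conjI allI impI ballI)
      fix k assume k: "k < p n" "k \<notin> ?S"
      have "\<bar>?T k\<bar> / Min ((\<lambda>j. \<bar>?T j\<bar>) ` ?S) \<le> UbF n / ?L"
        using Ubk[OF k] Ub_nn Lp Minge by (intro frac_le) auto
      then show "\<bar>?T k\<bar> / Min ((\<lambda>j. \<bar>?T j\<bar>) ` ?S) \<le> r n" using r2 by linarith
      have "real n powr \<mu> * \<bar>?T k\<bar> \<le> real n powr \<mu> * UbF n"
        using Ubk[OF k] by (intro mult_left_mono) auto
      then show "real n powr \<mu> * \<bar>?T k\<bar> \<le> r n" using r1 by linarith
    next
      fix j assume j: "j \<in> ?S"
      show "R n \<le> real n powr \<mu> * \<bar>?T j\<bar>"
        unfolding R_def using Lj[OF j] by (intro mult_left_mono) auto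
    next
      fix j assume sl: "s = Lam" and j: "j \<in> ?S"
      have "\<bar>?T j / \<beta> n j - 1\<bar> \<le> (nuF n + etaF n) / (\<alpha> * bm n)"
        using F.T_Lam[OF j] sl by (simp add: bm_def)
      then show "\<bar>?T j / \<beta> n j - 1\<bar> \<le> r n" using r3 by linarith
    qed
  qed
  have Pev: "eventually P sequentially"
  proof -
    have e6: "eventually (\<lambda>n. 1 \<le> real n powr \<mu> * (\<alpha> * bm n - nuF n - etaF n)) sequentially"
      using R_lim unfolding filterlim_at_top by blast
    have e7: "eventually (\<lambda>n. 1 \<le> real n powr \<mu> * bm n) sequentially"
      using L unfolding filterlim_at_top by blast
    show ?thesis
      using eventually_ge_at_top[of 1] A4(5) K1ev A6(3)[rule_format, of 1] small_ev e6 e7 K2ev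
    proof eventually_elim
      case (elim n)
      have "real (card (supp (p n) (\<beta> n))) \<le> K1 * real n powr \<delta>" using elim(3) by simp
      moreover have "ln (real (p n)) \<le> K2 * real n powr \<theta>" using elim(8) by simp
      ultimately show ?case using elim unfolding P_def resid_sig_def by auto
    qed
  qed
  have finU: "finite (U n)" for n
  proof -
    have "finite (gsQ n (X n) (Cset n (p n) (X n) (C1 * real n powr (-\<gamma>)) k))" for k
      by (rule gsQ(1), rule finite_subset[of _ "{..<p n}"]) (auto simp: Cset_def)
    then show ?thesis unfolding U_def by auto
  qed
  have cardU: "real (card (U n)) \<le> (2 + C * real n powr \<xi>) * real (p n)" for n
  proof -
    let ?A = "(\<lambda>k. Xstar n (p n) (X n) (C1 * real n powr (-\<gamma>)) k) ` {..<p n}"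
    let ?B = "\<Union>k\<in>{..<p n}. gsQ n (X n) (Cset n (p n) (X n) (C1 * real n powr (-\<gamma>)) k)"
    let ?C = "(\<lambda>k. resid_sig n (p n) (X n) (C1 * real n powr (-\<gamma>)) (\<beta> n) k) ` {..<p n}"
    have "card (U n) \<le> card ?A + card ?B + card ?C" unfolding U_def
      by (meson card_Un_le le_trans add_le_mono order_refl)
    moreover have "card ?A \<le> p n" "card ?C \<le> p n" by (auto intro: card_image_le[THEN order_trans])
    moreover have "real (card ?B) \<le> real (p n) * (C * real n powr \<xi>)"
    proof -
      have "card ?B \<le> (\<Sum>k<p n. card (gsQ n (X n) (Cset n (p n) (X n) (C1 * real n powr (-\<gamma>)) k)))"
        by (rule card_UN_le) simp
      then have "real (card ?B) \<le> (\<Sum>k<p n. real (card (gsQ n (X n) (Cset n (p n) (X n) (C1 * real n powr (-\<gamma>)) k))))"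
        by (metis of_nat_le_iff of_nat_sum)
      also have "\<dots> \<le> (\<Sum>k<p n. C * real n powr \<xi>)"
      proof (rule sum_mono)
        fix k assume "k \<in> {..<p n}"
        have fc: "finite (Cset n (p n) (X n) (C1 * real n powr (-\<gamma>)) k)"
          by (rule finite_subset[of _ "{..<p n}"]) (auto simp: Cset_def)
        have "card (gsQ n (X n) (Cset n (p n) (X n) (C1 * real n powr (-\<gamma>)) k)) \<le> card (Cset n (p n) (X n) (C1 * real n powr (-\<gamma>)) k)"
          by (rule gsQ(2)[OF fc])
        then show "real (card (gsQ n (X n) (Cset n (p n) (X n) (C1 * real n powr (-\<gamma>)) k))) \<le> C * real n powr \<xi>"
          using A3(5) \<open>k \<in> {..<p n}\<close> by (meson lessThan_iff of_nat_le_iff order_trans)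
      qed
      finally show ?thesis by simp
    qed
    ultimately have "real (card (U n)) \<le> real (p n) + real (p n) * (C * real n powr \<xi>) + real (p n)"
      by linarith
    then show ?thesis by (simp add: algebra_simps)
  qed
  define B1 where "B1 n = {\<omega> \<in> space (M n). \<exists>u\<in>U n. etaF n * sqrt (vinner n u u) < \<bar>vinner n u (\<epsilon> n \<omega>)\<bar>}" for n
  define B2 where "B2 n = {\<omega> \<in> space (M n). vinner n (\<epsilon> n \<omega>) (\<epsilon> n \<omega>) < \<sigma>\<^sup>2 / 4}" for n
  define B3 where "B3 n = {\<omega> \<in> space (M n). 4 * \<sigma>\<^sup>2 < vinner n (\<epsilon> n \<omega>) (\<epsilon> n \<omega>)}" for n
  have Bev: "B1 n \<in> sets (M n)" "B2 n \<in> sets (M n)" "B3 n \<in> sets (M n)" for n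
  proof -
    show "B1 n \<in> sets (M n)" unfolding B1_def
      by (rule prob_space.bad1_ev[OF prob[rule_format, of n] indep[rule_format, of n] finU[of n]])
    show "B2 n \<in> sets (M n)" unfolding B2_def
      by (rule prob_space.bad23_ev(1)[OF prob[rule_format, of n] indep[rule_format, of n]])
    show "B3 n \<in> sets (M n)" unfolding B3_def
      by (rule prob_space.bad23_ev(2)[OF prob[rule_format, of n] indep[rule_format, of n]])
  qed
  have Eeq: "E n = space (M n) - (B1 n \<union> B2 n \<union> B3 n)" if "P n" for n
    using that by (auto simp: E_def Good_def B1_def B2_def B3_def not_less)
  have Esets: "\<forall>n. E n \<in> sets (M n)"
  proof
    fix n show "E n \<in> sets (M n)"
    proof (cases "P n")
      case True then show ?thesis using Eeq[OF True] Bev[of n] by auto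
    next
      case False then show ?thesis by (simp add: E_def)
    qed
  qed
  define W where "W n = (2 + C * real n powr \<xi>) * real (p n) * (2 * exp (- (real n powr \<tau>) / (2 * \<sigma>\<^sup>2)))
      + exp (real n / 4) * (1 / sqrt 3) ^ n + exp (- real n) * (1 / sqrt (1 / 2)) ^ n" for n
  have Wlim: "W \<longlonglongrightarrow> 0"
  proof -
    have "\<xi> < 2 * \<gamma> - 2 * \<delta>" using A3(4) by (simp add: algebra_simps)
    then have xi1: "\<xi> \<le> 1" using A2(2) A1(1) by linarith
    have lnp: "eventually (\<lambda>n. ln (real (p n)) \<le> K2 * real n powr \<theta>) sequentially"
      using K2ev by eventually_elim simp
    have "W \<longlonglongrightarrow> 0 + 0 + 0" unfolding W_def
      by (intro tendsto_add union_lim[OF A2(3) taus(1) sigma_pos A3(2) xi1 lnp] geo1 geo2)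
    then show ?thesis by simp
  qed
  have Wbound: "1 - W n \<le> measure (M n) (E n)" if Pn: "P n" for n
  proof -
    interpret prob_space "M n" using prob by auto
    have n1: "real n \<ge> 1" and n0: "n > 0" using Pn by (auto simp: P_def)
    have ind: "indep_vars (\<lambda>_. borel) (\<lambda>i \<omega>. \<epsilon> n \<omega> i) {..<n}" using indep by auto
    have D: "\<And>i. i < n \<Longrightarrow> distributed (M n) lborel (\<lambda>\<omega>. \<epsilon> n \<omega> i) (normal_density 0 (\<sigma> / sqrt (real n)))"
      using gauss by auto
    have sp: "\<sigma> / sqrt (real n) > 0" using sigma_pos n0 by simp
    have ep: "etaF n > 0" using n0 by simp
    have p1: "prob (B1 n) \<le> real (card (U n)) * (2 * exp (- (etaF n)\<^sup>2 / (2 * (\<sigma> / sqrt (real n))\<^sup>2)))"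
      unfolding B1_def by (rule union_tail[OF ind D sp ep finU])
    have ex: "(etaF n)\<^sup>2 / (2 * (\<sigma> / sqrt (real n))\<^sup>2) = real n powr \<tau> / (2 * \<sigma>\<^sup>2)"
    proof -
      have "real n powr (\<tau> - 1) * real n = real n powr \<tau>"
        using n0 by (simp add: powr_diff)
      then show ?thesis unfolding eta_sq using n0 sigma_pos by (simp add: power_divide field_simps)
    qed
    have ex': "- (etaF n)\<^sup>2 / (2 * (\<sigma> / sqrt (real n))\<^sup>2) = - (real n powr \<tau>) / (2 * \<sigma>\<^sup>2)"
      using ex by (metis minus_divide_left)
    have p1': "prob (B1 n) \<le> (2 + C * real n powr \<xi>) * real (p n) * (2 * exp (- (real n powr \<tau>) / (2 * \<sigma>\<^sup>2)))"
    proof -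
      have "prob (B1 n) \<le> real (card (U n)) * (2 * exp (- (real n powr \<tau>) / (2 * \<sigma>\<^sup>2)))"
        using p1 unfolding ex' .
      also have "\<dots> \<le> (2 + C * real n powr \<xi>) * real (p n) * (2 * exp (- (real n powr \<tau>) / (2 * \<sigma>\<^sup>2)))"
        using cardU[of n] by (intro mult_right_mono) auto
      finally show ?thesis .
    qed
    have p2: "prob (B2 n) \<le> exp (real n / 4) * (1 / sqrt 3) ^ n"
      unfolding B2_def by (rule sq_tails(1)[OF ind D sigma_pos n0])
    have p3: "prob (B3 n) \<le> exp (- real n) * (1 / sqrt (1 / 2)) ^ n"
      unfolding B3_def by (rule sq_tails(2)[OF ind D sigma_pos n0])
    have "prob (B1 n \<union> B2 n \<union> B3 n) \<le> prob (B1 n) + prob (B2 n) + prob (B3 n)"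
      using Bev[of n] by (meson measure_Un_le sets.Un order_trans add_right_mono)
    then have "prob (B1 n \<union> B2 n \<union> B3 n) \<le> W n" using p1' p2 p3 unfolding W_def by linarith
    moreover have "prob (E n) = 1 - prob (B1 n \<union> B2 n \<union> B3 n)"
      unfolding Eeq[OF Pn] using Bev[of n] by (intro prob_compl) auto
    ultimately show ?thesis by linarith
  qed
  have Elim: "(\<lambda>n. measure (M n) (E n)) \<longlonglongrightarrow> 1"
  proof (rule tendsto_sandwich[of "\<lambda>n. 1 - W n" _ _ "\<lambda>n. 1"])
    show "eventually (\<lambda>n. 1 - W n \<le> measure (M n) (E n)) sequentially"
      using Pev by eventually_elim (rule Wbound)
    show "eventually (\<lambda>n. measure (M n) (E n) \<le> 1) sequentially"
      using prob by (intro always_eventually allI prob_space.prob_le_1) auto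
    show "(\<lambda>n. 1 - W n) \<longlonglongrightarrow> 1" using tendsto_diff[OF tendsto_const Wlim, of 1] by simp
  qed simp
  have rlim: "r \<longlonglongrightarrow> 0"
  proof -
    have a: "(\<lambda>n. real n powr \<mu> * UbF n) \<longlonglongrightarrow> 0" by (rule Ub_lim)
    have b: "(\<lambda>n. UbF n / (\<alpha> * bm n - nuF n - etaF n)) \<longlonglongrightarrow> 0"
    proof (rule tendsto_sandwich[of "\<lambda>n. 0" _ _ "\<lambda>n. real n powr \<mu> * UbF n"])
      show "eventually (\<lambda>n. 0 \<le> UbF n / (\<alpha> * bm n - nuF n - etaF n)) sequentially"
        using Pev
      proof eventually_elim
        case (elim n)
        have "1 \<le> real n powr \<mu> * (\<alpha> * bm n - nuF n - etaF n)" using elim by (simp add: P_def)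
        then have "\<alpha> * bm n - nuF n - etaF n > 0" by (smt (verit) mult_nonneg_nonpos powr_ge_zero)
        then show ?case using Ub_nn[of n] by simp
      qed
      show "eventually (\<lambda>n. UbF n / (\<alpha> * bm n - nuF n - etaF n) \<le> real n powr \<mu> * UbF n) sequentially"
        using Pev
      proof eventually_elim
        case (elim n)
        have h: "1 \<le> real n powr \<mu> * (\<alpha> * bm n - nuF n - etaF n)" using elim by (simp add: P_def)
        then have Lp: "\<alpha> * bm n - nuF n - etaF n > 0" by (smt (verit) mult_nonneg_nonpos powr_ge_zero)
        have "UbF n * 1 \<le> UbF n * (real n powr \<mu> * (\<alpha> * bm n - nuF n - etaF n))"
          using h Ub_nn[of n] by (intro mult_left_mono) auto
        then show ?case using Lp by (simp add: divide_le_eq mult_ac)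
      qed
    qed (use a in auto)
    have c: "(\<lambda>n. (nuF n + etaF n) / (\<alpha> * bm n)) \<longlonglongrightarrow> 0"
    proof (rule tendsto_sandwich[of "\<lambda>n. 0" _ _ "\<lambda>n. real n powr \<mu> * (nuF n + etaF n) / \<alpha>"])
      show "eventually (\<lambda>n. 0 \<le> (nuF n + etaF n) / (\<alpha> * bm n)) sequentially"
        using Pev
      proof eventually_elim
        case (elim n)
        have "1 \<le> real n powr \<mu> * bm n" using elim by (simp add: P_def)
        then have "bm n > 0" by (smt (verit) mult_nonneg_nonpos powr_ge_zero)
        then show ?case using nu_nn[of n] A5(1) by simp
      qed
      show "eventually (\<lambda>n. (nuF n + etaF n) / (\<alpha> * bm n) \<le> real n powr \<mu> * (nuF n + etaF n) / \<alpha>) sequentially"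
        using Pev
      proof eventually_elim
        case (elim n)
        have h: "1 \<le> real n powr \<mu> * bm n" using elim by (simp add: P_def)
        then have bp: "bm n > 0" by (smt (verit) mult_nonneg_nonpos powr_ge_zero)
        have ne: "nuF n + etaF n \<ge> 0" using nu_nn[of n] by simp
        have "(nuF n + etaF n) * 1 \<le> (nuF n + etaF n) * (real n powr \<mu> * bm n)"
          using h ne by (intro mult_left_mono) auto
        then show ?case using bp A5(1) by (intro aux_div) auto
      qed
      show "(\<lambda>n. real n powr \<mu> * (nuF n + etaF n) / \<alpha>) \<longlonglongrightarrow> 0"
        using tendsto_divide[OF nueta_lim tendsto_const[of \<alpha>]] A5(1) by simp
    qed simp
    have "r \<longlonglongrightarrow> 0 + 0 + 0" unfolding r_def[abs_def] by (intro tendsto_add a b c)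
    then show ?thesis by simp
  qed
  have Rlim: "filterlim R at_top sequentially" unfolding R_def[abs_def] by (rule R_lim)
  show ?thesis
    apply (rule exI[of _ E], rule exI[of _ r], rule exI[of _ R])
    apply (intro conjI)
        apply (rule Esets)
       apply (rule Elim)
      apply (rule rlim)
     apply (rule Rlim)
  proof (intro allI ballI)
    fix n \<omega> assume "\<omega> \<in> E n"
    then have "P n" "Good n \<omega>" by (auto simp: E_def)
    then show "let T = tilted s n (p n) (X n) (C1 * real n powr (-\<gamma>))
                  (resp n (p n) (X n) (\<beta> n) (\<epsilon> n \<omega>));
            S = supp (p n) (\<beta> n)
        in (\<forall>k < p n. k \<notin> S \<longrightarrow>
               \<bar>T k\<bar> / Min ((\<lambda>j. \<bar>T j\<bar>) ` S) \<le> r n \<and>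
               real n powr \<mu> * \<bar>T k\<bar> \<le> r n) \<and>
           (\<forall>j\<in>S. R n \<le> real n powr \<mu> * \<bar>T j\<bar>) \<and>
           (s = Lam \<longrightarrow> (\<forall>j\<in>S. \<bar>T j / \<beta> n j - 1\<bar> \<le> r n))"
      by (rule claims)
  qed
qed
  done

end
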